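(* Assume the standing assumptions (a)–(d) below, let $\bar\mu$ be a probability measure on $\mathbb{R}^d$ with finite second moment, $N\in\mathbb{N}$, $T>0$, $\epsilon\ge0$ with $(L+2\epsilon\tilde L)T^2\le1$. Let $x=(x^1,\dots,x^N)\sim\bar\mu^{\otimes N}$ and, independently, $\xi=(\xi^1,\dots,\xi^N)\sim\mathcal N(0,I_{Nd})$. Let $\bar{\mathbf X}^{\bar\mu,i}(x^i)=\bar q_T(x^i,\xi^i,\bar\mu)$ ($N$ independent copies of one nHMC step with initial distribution $\bar\mu$) and $\mathbf X^i(x)=q^i_T(x,\xi)$ (one xHMC step of the mean-field particle system from $\bar\mu^{\otimes N}$, with the same velocities). Then $$\mathbb{E}\Big[\frac1N\sum_{i=1}^N|\bar{\mathbf X}^{\bar\mu,i}(x^i)-\mathbf X^i(x)|\Big]\le N^{-1/2}\mathbf B,\qquad \mathbf B=4T^2\epsilon\tilde L\,\mathbf B_1^{1/2},$$ where $\mathbf B_1$ is any finite constant with $\sup_{0\le t\le T}\int_{\mathbb{R}^d}|y|^2\bar\mu_t(\mathrm{d}y)\le\mathbf B_1$.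
   Context: Standing assumptions: $V:\mathbb{R}^d\to\mathbb{R}$, $W:\mathbb{R}^d\times\mathbb{R}^d\to\mathbb{R}$ are $C^1$, $\nabla_1W$ is the gradient of $W$ in its first argument, and there are constants $L>0,K>0,\mathcal R\ge0,\tilde L\ge0$ with: (a) $V(0)=0$, $V\ge0$; (b) $|\nabla V(x)-\nabla V(y)|\le L|x-y|$; (c) $\langle x-y,\nabla V(x)-\nabla V(y)\rangle\ge K|x-y|^2+L^{-1}|\nabla V(x)-\nabla V(y)|^2$ whenever $|x-y|\ge\mathcal R$; (d) $W$ symmetric and $|\nabla_1W(x,y)-\nabla_1W(\tilde x,\tilde y)|\le\tilde L(|x-\tilde x|+|y-\tilde y|)$. Nonlinear dynamics $(\bar q_t,\bar p_t)(x,v,\bar\mu)$ on $\mathbb{R}^{2d}$: $\dot{\bar q}_t=\bar p_t$, $\dot{\bar p}_t=-\nabla V(\bar q_t)-\epsilon\int\nabla_1W(\bar q_t,u)\bar\mu_t(\mathrm{d}u)$, $(\bar q_0,\bar p_0)=(x,v)$, with $\bar\mu_t=\mathrm{Law}(\bar q_t(\tilde x,\tilde v,\bar\mu))$, $(\tilde x,\tilde v)\sim\bar\mu\otimes\mathcal N(0,I_d)$. Particle system: $U(x)=\sum_{i=1}^N\big(V(x^i)+\frac{\epsilon}{2N}\sum_{j=1}^NW(x^i,x^j)\big)$ on $\mathbb{R}^{Nd}$, $\nabla_iU=\partial U/\partial x^i$; the exact flow $(q_t,p_t)(x,v)$ solves $\dot q^i_t=p^i_t$, $\dot p^i_t=-\nabla_iU(q_t)$,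 $(q_0,p_0)=(x,v)$, $i=1,\dots,N$. *)

theory Defs
  imports "HOL-Probability.Probability"
begin

definition std_gaussian :: "'a::euclidean_space measure" where
  "std_gaussian = density lborel
     (\<lambda>x. ennreal ((2 * pi) powr (- real DIM('a) / 2) * exp (- (norm x)\<^sup>2 / 2)))"

definition nonlin_law :: "'a::euclidean_space measure \<Rightarrow> (real \<Rightarrow> 'a \<Rightarrow> 'a \<Rightarrow> 'a) \<Rightarrow> real \<Rightarrow> 'a measure" where
  "nonlin_law mu qb t = distr (mu \<Otimes>\<^sub>M std_gaussian) borel (\<lambda>(y, w). qb t y w)"

definition U_pot :: "nat \<Rightarrow> real \<Rightarrow> ('a \<Rightarrow> real) \<Rightarrow> ('a \<Rightarrow> 'a \<Rightarrow> real) \<Rightarrow> (nat \<Rightarrow> 'a) \<Rightarrow> real" where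
  "U_pot N \<epsilon> V W y = (\<Sum>i<N. V (y i) + \<epsilon> / (2 * real N) * (\<Sum>j<N. W (y i) (y j)))"

end

theory Submission
  imports Defs
begin

lemma std_gaussian_prob: "prob_space (std_gaussian :: 'a::euclidean_space measure)"
proof
  have eq: "ennreal ((2 * pi) powr (- real DIM('a) / 2) * exp (- (norm x)\<^sup>2 / 2))
      = (\<Prod>b\<in>Basis. ennreal (std_normal_density (x \<bullet> b)))" for x :: 'a
  proof -
    have n: "(norm x)\<^sup>2 = (\<Sum>b\<in>Basis. (x \<bullet> b)\<^sup>2)"
      unfolding power2_norm_eq_inner by (subst euclidean_inner) (simp add: power2_eq_square)
    have "exp (- (norm x)\<^sup>2 / 2) = (\<Prod>b\<in>Basis. exp (- (x \<bullet> b)\<^sup>2 / 2))"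
      unfolding n by (simp add: exp_sum[symmetric] sum_divide_distrib sum_negf)
    moreover have "(2 * pi) powr (- real DIM('a) / 2) = (\<Prod>b\<in>(Basis::'a set). 1 / sqrt (2 * pi))"
    proof -
      have "(2 * pi) powr (- real DIM('a) / 2) = ((2*pi) powr (-1/2)) ^ DIM('a)"
        by (simp add: powr_realpow[symmetric] powr_powr)
      also have "(2*pi) powr (-1/2) = 1 / sqrt (2*pi)"
        by (simp add: powr_minus_divide powr_half_sqrt)
      finally show ?thesis by simp
    qed
    moreover have "(\<Prod>b\<in>Basis. std_normal_density (x \<bullet> b)) = (\<Prod>b\<in>(Basis::'a set). 1 / sqrt (2 * pi)) * (\<Prod>b\<in>Basis. exp (- (x \<bullet> b)\<^sup>2 / 2))"
      unfolding prod.distrib[symmetric] by (simp only: std_normal_density_def)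
    ultimately have "(2 * pi) powr (- real DIM('a) / 2) * exp (- (norm x)\<^sup>2 / 2)
        = (\<Prod>b\<in>Basis. std_normal_density (x \<bullet> b))"
      by simp
    then show ?thesis
      by (simp add: prod_ennreal std_normal_density_def)
  qed
  have "emeasure (std_gaussian::'a measure) (space std_gaussian) =
      (\<integral>\<^sup>+x. (\<Prod>b\<in>Basis. ennreal (std_normal_density (x \<bullet> b))) \<partial>(lborel::'a measure))"
    unfolding std_gaussian_def eq by (simp add: emeasure_density)
  also have "\<dots> = (\<Prod>b\<in>(Basis::'a set). (\<integral>\<^sup>+x. ennreal (std_normal_density x) \<partial>lborel))"
    by (rule nn_integral_lborel_prod) auto
  also have "(\<integral>\<^sup>+x. ennreal (std_normal_density x) \<partial>lborel) = 1"
    by (subst nn_integral_eq_integral) (auto simp: normal_density_nonneg)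
  finally show "emeasure (std_gaussian::'a measure) (space std_gaussian) = 1" by simp
qed

lemma pathwise_bound:
  fixes Z P F :: "nat \<Rightarrow> real \<Rightarrow> 'a::euclidean_space" and e :: "nat \<Rightarrow> real \<Rightarrow> real"
    and N :: nat and T \<alpha> \<beta> :: real
  assumes T: "T > 0" and ab: "\<alpha> \<ge> 0" "\<beta> \<ge> 0" "(\<alpha> + \<beta>) * T\<^sup>2 \<le> 1"
    and Z0: "\<And>i. i < N \<Longrightarrow> Z i 0 = 0" and P0: "\<And>i. i < N \<Longrightarrow> P i 0 = 0"
    and dZ: "\<And>i s. i < N \<Longrightarrow> s \<in> {0..T} \<Longrightarrow> (Z i has_vector_derivative P i s) (at s within {0..T})"
    and dP: "\<And>i s. i < N \<Longrightarrow> s \<in> {0..T} \<Longrightarrow> (P i has_vector_derivative F i s) (at s within {0..T})"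
    and Fb: "\<And>i s. i < N \<Longrightarrow> s \<in> {0..T} \<Longrightarrow>
       norm (F i s) \<le> \<alpha> * norm (Z i s) + \<beta> * ((\<Sum>j<N. norm (Z j s)) / N) + e i s"
    and e_int: "\<And>i. i < N \<Longrightarrow> e i integrable_on {0..T}"
    and e_nn: "\<And>i s. i < N \<Longrightarrow> s \<in> {0..T} \<Longrightarrow> 0 \<le> e i s"
  shows "(\<Sum>i<N. norm (Z i T)) / N \<le> 2 * T * integral {0..T} (\<lambda>s. (\<Sum>i<N. e i s) / N)"
proof (cases "N = 0")
  case True then show ?thesis by simp
next
  case False
  then have Npos: "real N > 0" by simp
  define m where "m s = (\<Sum>i<N. norm (Z i s)) / N" for s
  define eb where "eb s = (\<Sum>i<N. e i s) / N" for s
  have Zc: "continuous_on {0..T} (Z i)" if "i < N" for i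
    by (rule continuous_on_vector_derivative[OF dZ[OF that]])
  have mc: "continuous_on {0..T} m"
    unfolding m_def using False by (intro continuous_intros Zc) auto
  have mc': "continuous_on {0..t} m" if "t \<in> {0..T}" for t
    using that by (auto intro: continuous_on_subset[OF mc])
  have Zc': "continuous_on {0..t} (Z i)" if "t \<in> {0..T}" "i < N" for t i
    using that by (auto intro: continuous_on_subset[OF Zc])
  have m_nn: "0 \<le> m s" for s unfolding m_def by (simp add: sum_nonneg)
  obtain t0 where t0: "t0 \<in> {0..T}" and t0max: "\<And>s. s \<in> {0..T} \<Longrightarrow> m s \<le> m t0"
    using continuous_attains_sup[OF compact_Icc _ mc] T by fastforce
  define M where "M = m t0"
  have eb_int: "eb integrable_on {0..T}"
    unfolding eb_def using e_int by (intro integrable_on_divide integrable_sum) auto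
  have eb_nn: "s \<in> {0..T} \<Longrightarrow> 0 \<le> eb s" for s unfolding eb_def using e_nn by (auto intro!: divide_nonneg_nonneg sum_nonneg)
  have key: "norm (Z i t) \<le> integral {0..t} (\<lambda>s. (t - s) * (\<alpha> * norm (Z i s) + \<beta> * m s) + t * e i s)"
    if t: "t \<in> {0..T}" and i: "i < N" for t i
  proof -
    have sub: "{0..t} \<subseteq> {0..T}" using t by auto
    have "((\<lambda>s. (t - s) *\<^sub>R F i s) has_integral
            (((t - t) *\<^sub>R P i t + Z i t) - ((t - 0) *\<^sub>R P i 0 + Z i 0))) {0..t}"
    proof (rule fundamental_theorem_of_calculus)
      show "0 \<le> t" using t by auto
      fix s assume s: "s \<in> {0..t}"
      have sT: "s \<in> {0..T}" using s t by auto
      have d1: "(Z i has_vector_derivative P i s) (at s within {0..t})"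
        by (rule has_vector_derivative_within_subset[OF dZ[OF i sT] sub])
      have d2: "(P i has_vector_derivative F i s) (at s within {0..t})"
        by (rule has_vector_derivative_within_subset[OF dP[OF i sT] sub])
      have "((\<lambda>s. (t - s) *\<^sub>R P i s + Z i s) has_vector_derivative
              ((t - s) *\<^sub>R F i s + (- 1) *\<^sub>R P i s + P i s)) (at s within {0..t})"
      proof -
        have h: "((\<lambda>s. t - s) has_field_derivative (- 1)) (at s within {0..t})"
          by (auto intro!: derivative_eq_intros)
        show ?thesis
          using has_vector_derivative_add[OF has_vector_derivative_scaleR[OF h d2] d1] by (simp add: algebra_simps)
      qed
      then show "((\<lambda>s. (t - s) *\<^sub>R P i s + Z i s) has_vector_derivative (t - s) *\<^sub>R F i s) (at s within {0..t})"
        by simp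
    qed
    then have hi: "((\<lambda>s. (t - s) *\<^sub>R F i s) has_integral Z i t) {0..t}"
      using Z0[OF i] P0[OF i] by simp
    have gint: "(\<lambda>s. (t - s) * (\<alpha> * norm (Z i s) + \<beta> * m s) + t * e i s) integrable_on {0..t}"
    proof (rule integrable_add)
      show "(\<lambda>s. (t - s) * (\<alpha> * norm (Z i s) + \<beta> * m s)) integrable_on {0..t}"
        by (intro integrable_continuous_interval continuous_intros Zc'[OF t i] mc'[OF t])
      show "(\<lambda>s. t * e i s) integrable_on {0..t}"
        by (intro integrable_on_mult_right integrable_on_subinterval[OF e_int[OF i] sub])
    qed
    have "norm (integral {0..t} (\<lambda>s. (t - s) *\<^sub>R F i s)) \<le>
          integral {0..t} (\<lambda>s. (t - s) * (\<alpha> * norm (Z i s) + \<beta> * m s) + t * e i s)"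
    proof (rule integral_norm_bound_integral)
      show "(\<lambda>s. (t - s) *\<^sub>R F i s) integrable_on {0..t}" using hi by blast
      show "(\<lambda>s. (t - s) * (\<alpha> * norm (Z i s) + \<beta> * m s) + t * e i s) integrable_on {0..t}" by (rule gint)
      fix s assume s: "s \<in> {0..t}"
      have sT: "s \<in> {0..T}" using s t by auto
      have ts: "0 \<le> t - s" "t - s \<le> t" using s by auto
      have "norm ((t - s) *\<^sub>R F i s) = (t - s) * norm (F i s)" using ts by simp
      also have "\<dots> \<le> (t - s) * (\<alpha> * norm (Z i s) + \<beta> * m s + e i s)"
        using Fb[OF i sT] ts(1) unfolding m_def by (intro mult_left_mono) auto
      also have "\<dots> \<le> (t - s) * (\<alpha> * norm (Z i s) + \<beta> * m s) + t * e i s"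
        using ts e_nn[OF i sT] by (simp add: distrib_left mult_right_mono)
      finally show "norm ((t - s) *\<^sub>R F i s) \<le> (t - s) * (\<alpha> * norm (Z i s) + \<beta> * m s) + t * e i s" .
    qed
    then show ?thesis using integral_unique[OF hi] by simp
  qed
  have mbound: "m t \<le> (\<alpha> + \<beta>) * M * t\<^sup>2 / 2 + t * integral {0..t} eb" if t: "t \<in> {0..T}" for t
  proof -
    have sub: "{0..t} \<subseteq> {0..T}" using t by auto
    define g where "g i s = (t - s) * (\<alpha> * norm (Z i s) + \<beta> * m s) + t * e i s" for i s
    have gint: "g i integrable_on {0..t}" if i: "i < N" for i
      unfolding g_def
    proof (rule integrable_add)
      show "(\<lambda>s. (t - s) * (\<alpha> * norm (Z i s) + \<beta> * m s)) integrable_on {0..t}"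
        by (intro integrable_continuous_interval continuous_intros Zc'[OF t i] mc'[OF t])
      show "(\<lambda>s. t * e i s) integrable_on {0..t}"
        by (intro integrable_on_mult_right integrable_on_subinterval[OF e_int[OF i] sub])
    qed
    have "m t \<le> (\<Sum>i<N. integral {0..t} (g i)) / N"
      unfolding m_def[of t] g_def using key[OF t] Npos
      by (intro divide_right_mono sum_mono) auto
    also have "\<dots> = integral {0..t} (\<lambda>s. (\<Sum>i<N. g i s) / N)"
    proof -
      have hs: "((\<lambda>s. \<Sum>i<N. g i s) has_integral (\<Sum>i<N. integral {0..t} (g i))) {0..t}"
        by (rule has_integral_sum) (auto intro: integrable_integral gint)
      have "((\<lambda>s. (\<Sum>i<N. g i s) / N) has_integral (\<Sum>i<N. integral {0..t} (g i)) / N) {0..t}"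
        by (rule has_integral_divide[OF hs])
      then show ?thesis by (rule integral_unique[symmetric])
    qed
    also have "\<dots> \<le> integral {0..t} (\<lambda>s. (\<alpha> + \<beta>) * M * (t - s) + t * eb s)"
    proof (rule integral_le)
      show "(\<lambda>s. (\<Sum>i<N. g i s) / N) integrable_on {0..t}"
        using gint by (intro integrable_on_divide integrable_sum) auto
      show "(\<lambda>s. (\<alpha> + \<beta>) * M * (t - s) + t * eb s) integrable_on {0..t}"
        by (intro integrable_add integrable_continuous_interval continuous_intros
              integrable_on_mult_right integrable_on_subinterval[OF eb_int sub])
      fix s assume s: "s \<in> {0..t}"
      have sT: "s \<in> {0..T}" using s t by auto
      have "(\<Sum>i<N. g i s) / N = (t - s) * (\<alpha> * m s + \<beta> * m s) + t * eb s"
      proof -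
        have "(\<Sum>i<N. g i s) = (t - s) * \<alpha> * (\<Sum>i<N. norm (Z i s)) + real N * ((t - s) * \<beta> * m s) + t * (\<Sum>i<N. e i s)"
        proof -
          have "(\<Sum>i<N. g i s) = (\<Sum>i<N. (t - s) * \<alpha> * norm (Z i s) + ((t - s) * \<beta> * m s) + t * e i s)"
            unfolding g_def by (intro sum.cong) (simp_all add: algebra_simps)
          also have "\<dots> = (t - s) * \<alpha> * (\<Sum>i<N. norm (Z i s)) + real N * ((t - s) * \<beta> * m s) + t * (\<Sum>i<N. e i s)"
            by (simp only: sum.distrib sum_distrib_left sum_constant) simp
          finally show ?thesis .
        qed
        moreover have "(\<Sum>i<N. norm (Z i s)) = real N * m s" unfolding m_def using Npos by simp
        moreover have "(\<Sum>i<N. e i s) = real N * eb s" unfolding eb_def using Npos by simp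
        ultimately show ?thesis using Npos by (simp add: field_simps)
      qed
      also have "\<dots> \<le> (\<alpha> + \<beta>) * M * (t - s) + t * eb s"
      proof -
        have h: "(t - s) * ((\<alpha> + \<beta>) * m s) \<le> (t - s) * ((\<alpha> + \<beta>) * M)"
          using t0max[OF sT] s ab unfolding M_def by (intro mult_left_mono) auto
        then show ?thesis by (simp add: algebra_simps)
      qed
      finally show "(\<Sum>i<N. g i s) / N \<le> (\<alpha> + \<beta>) * M * (t - s) + t * eb s" .
    qed
    also have "\<dots> = (\<alpha> + \<beta>) * M * (t\<^sup>2 / 2) + t * integral {0..t} eb"
    proof -
      have "((\<lambda>s. t - s) has_integral ((t * t - t\<^sup>2 / 2) - (t * 0 - 0\<^sup>2 / 2))) {0..t}"
      proof (rule fundamental_theorem_of_calculus)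
        show "0 \<le> t" using t by auto
        fix s assume "s \<in> {0..t}"
        show "((\<lambda>s. t * s - s\<^sup>2 / 2) has_vector_derivative t - s) (at s within {0..t})"
          by (auto intro!: derivative_eq_intros simp: has_real_derivative_iff_has_vector_derivative[symmetric])
      qed
      then have h1: "((\<lambda>s. t - s) has_integral (t\<^sup>2 / 2)) {0..t}"
        by (simp add: power2_eq_square)
      have h2: "(eb has_integral integral {0..t} eb) {0..t}"
        using integrable_on_subinterval[OF eb_int sub] by (simp add: has_integral_integral)
      have "((\<lambda>s. (\<alpha> + \<beta>) * M * (t - s) + t * eb s) has_integral
              ((\<alpha> + \<beta>) * M * (t\<^sup>2 / 2) + t * integral {0..t} eb)) {0..t}"
        by (intro has_integral_add has_integral_mult_right h1 h2)
      then show ?thesis by (rule integral_unique)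
    qed
    finally show ?thesis by simp
  qed
  have "M \<le> (\<alpha> + \<beta>) * M * t0\<^sup>2 / 2 + t0 * integral {0..t0} eb"
    using mbound[OF t0] unfolding M_def .
  also have "(\<alpha> + \<beta>) * M * t0\<^sup>2 / 2 \<le> M / 2"
  proof -
    have "t0\<^sup>2 \<le> T\<^sup>2" using t0 by (auto intro: power_mono)
    then have "(\<alpha> + \<beta>) * t0\<^sup>2 \<le> 1" using ab by (meson mult_left_mono order_trans add_nonneg_nonneg)
    then show ?thesis using m_nn[of t0] unfolding M_def
      by (metis (no_types, opaque_lifting) mult.commute mult.left_commute mult_left_mono mult.right_neutral divide_right_mono zero_le_numeral times_divide_eq_right)
  qed
  also have "t0 * integral {0..t0} eb \<le> T * integral {0..T} eb"
  proof -
    have i1: "integral {0..t0} eb \<le> integral {0..T} eb"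
      using t0 eb_nn by (intro integral_subset_le integrable_on_subinterval[OF eb_int] eb_int) auto
    have i0: "0 \<le> integral {0..t0} eb"
      using t0 eb_nn by (intro integral_nonneg integrable_on_subinterval[OF eb_int]) auto
    show ?thesis using t0 i0 i1 by (auto intro: mult_mono)
  qed
  finally have "M \<le> 2 * T * integral {0..T} eb" by simp
  moreover have "m T \<le> M" unfolding M_def using T by (intro t0max) auto
  ultimately show ?thesis unfolding m_def eb_def by simp
qed

lemma lip2_cont:
  fixes g :: "'a::real_normed_vector \<Rightarrow> 'b::real_normed_vector \<Rightarrow> 'c::real_normed_vector"
  assumes lip: "\<And>x y x' y'. norm (g x y - g x' y') \<le> Lt * (norm (x - x') + norm (y - y'))"
    and Lt: "Lt \<ge> 0"
  shows "continuous_on UNIV (\<lambda>p. g (fst p) (snd p))"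
proof (rule lipschitz_on_continuous_on)
  show "(2 * Lt)-lipschitz_on UNIV (\<lambda>p. g (fst p) (snd p))"
  proof (rule lipschitz_onI)
    fix p q :: "'a \<times> 'b"
    have "norm (g (fst p) (snd p) - g (fst q) (snd q)) \<le> Lt * (norm (fst p - fst q) + norm (snd p - snd q))"
      by (rule lip)
    also have "\<dots> \<le> Lt * (2 * norm (p - q))"
    proof -
      have pq: "p - q = (fst p - fst q, snd p - snd q)" by (simp add: prod_eq_iff)
      have "norm (fst p - fst q) \<le> norm (p - q)" by (metis pq norm_fst_le)
      moreover have "norm (snd p - snd q) \<le> norm (p - q)" by (metis pq norm_snd_le)
      ultimately show ?thesis using Lt by (intro mult_left_mono) auto
    qed
    finally show "dist (g (fst p) (snd p)) (g (fst q) (snd q)) \<le> 2 * Lt * dist p q"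
      by (simp add: dist_norm)
  qed (use Lt in auto)
qed

lemma (in prob_space) jensen_sq:
  fixes f :: "'a \<Rightarrow> real"
  assumes f[measurable]: "f \<in> borel_measurable M" and sq: "integrable M (\<lambda>x. (f x)\<^sup>2)"
  shows "integrable M f" "(expectation f)\<^sup>2 \<le> expectation (\<lambda>x. (f x)\<^sup>2)"
proof -
  show fi: "integrable M f" using square_integrable_imp_integrable[OF f sq] .
  define c where "c = expectation f"
  have "0 \<le> expectation (\<lambda>x. (f x - c)\<^sup>2)" by (rule integral_nonneg_AE) auto
  also have "expectation (\<lambda>x. (f x - c)\<^sup>2) = expectation (\<lambda>x. (f x)\<^sup>2 - 2 * c * f x + c\<^sup>2)"
    by (simp add: power2_diff algebra_simps)
  also have "\<dots> = expectation (\<lambda>x. (f x)\<^sup>2) - 2 * c * c + c\<^sup>2"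
    using fi sq unfolding c_def by (simp add: prob_space)
  finally show "(expectation f)\<^sup>2 \<le> expectation (\<lambda>x. (f x)\<^sup>2)"
    unfolding c_def by (simp add: power2_eq_square)
qed

definition cmean :: "'a measure \<Rightarrow> ('a \<Rightarrow> 'a \<Rightarrow> 'b::{banach,second_countable_topology}) \<Rightarrow> 'a \<Rightarrow> 'b" where
  "cmean \<mu> g a = (\<integral>u. g a u \<partial>\<mu>)"

context
  fixes \<mu> :: "'a::euclidean_space measure" and g :: "'a \<Rightarrow> 'a \<Rightarrow> 'a" and Lt B :: real
  assumes \<mu>p: "prob_space \<mu>" and \<mu>s: "sets \<mu> = sets borel"
    and lip: "\<And>x y x' y'. norm (g x y - g x' y') \<le> Lt * (norm (x - x') + norm (y - y'))"
    and Lt: "Lt \<ge> 0"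
    and mom: "integrable \<mu> (\<lambda>u. (norm u)\<^sup>2)" and momB: "(\<integral>u. (norm u)\<^sup>2 \<partial>\<mu>) \<le> B"
begin

lemma g_meas[measurable]:
  assumes "f \<in> borel_measurable M" "h \<in> borel_measurable M"
  shows "(\<lambda>x. g (f x) (h x)) \<in> borel_measurable M"
  by (rule borel_measurable_continuous_Pair[OF assms lip2_cont[OF lip Lt]])

lemma mu_borel: "f \<in> borel_measurable borel \<Longrightarrow> f \<in> borel_measurable \<mu>"
  using measurable_cong_sets[OF \<mu>s refl] by auto

lemma norm_meas: "norm \<in> borel_measurable \<mu>"
  by (rule mu_borel) simp

lemma norm_int: "integrable \<mu> norm"
  using prob_space.jensen_sq(1)[OF \<mu>p norm_meas mom] .

lemma m1_sq: "(\<integral>u. norm u \<partial>\<mu>)\<^sup>2 \<le> B"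
  using prob_space.jensen_sq(2)[OF \<mu>p norm_meas mom] momB by linarith

lemma B_nn: "0 \<le> B"
proof -
  have "0 \<le> (\<integral>u. norm u \<partial>\<mu>)\<^sup>2" by simp
  then show ?thesis using m1_sq by linarith
qed

lemma g_int: "integrable \<mu> (g a)"
proof (rule Bochner_Integration.integrable_bound)
  show "integrable \<mu> (\<lambda>u. norm (g a 0) + Lt * norm u)"
  proof -
    interpret prob_space \<mu> by (rule \<mu>p)
    show ?thesis using norm_int by (intro Bochner_Integration.integrable_add integrable_mult_right) auto
  qed
  show "g a \<in> borel_measurable \<mu>"
    by (rule mu_borel, rule g_meas) auto
  show "AE x in \<mu>. norm (g a x) \<le> norm (norm (g a 0) + Lt * norm x)"
  proof (rule AE_I2)
    fix x
    have "norm (g a x) \<le> norm (g a 0) + norm (g a x - g a 0)" by (rule norm_triangle_sub)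
    also have "norm (g a x - g a 0) \<le> Lt * norm x" using lip[of a x a 0] by simp
    finally show "norm (g a x) \<le> norm (norm (g a 0) + Lt * norm x)" using Lt by simp
  qed
qed

lemma cmean_bound: "norm (cmean \<mu> g a - g a b) \<le> Lt * ((\<integral>u. norm u \<partial>\<mu>) + norm b)"
proof -
  have ci: "integrable \<mu> (\<lambda>u. g a b)"
    by (auto simp: prob_space.finite_measure[OF \<mu>p] finite_measure.integrable_const)
  have "cmean \<mu> g a - g a b = (\<integral>u. g a u - g a b \<partial>\<mu>)"
    unfolding cmean_def by (subst Bochner_Integration.integral_diff[OF g_int ci]) (simp add: prob_space.prob_space[OF \<mu>p])
  also have "norm \<dots> \<le> (\<integral>u. norm (g a u - g a b) \<partial>\<mu>)" by (rule integral_norm_bound)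
  also have "\<dots> \<le> (\<integral>u. Lt * norm u + Lt * norm b \<partial>\<mu>)"
  proof (rule integral_mono)
    show "integrable \<mu> (\<lambda>u. norm (g a u - g a b))" by (intro integrable_norm Bochner_Integration.integrable_diff g_int ci)
    show "integrable \<mu> (\<lambda>u. Lt * norm u + Lt * norm b)"
    proof -
      interpret prob_space \<mu> by (rule \<mu>p)
      show ?thesis using norm_int by (intro Bochner_Integration.integrable_add integrable_mult_right) auto
    qed
    fix u
    have "norm (g a u - g a b) \<le> Lt * norm (u - b)" using lip[of a u a b] by simp
    also have "\<dots> \<le> Lt * (norm u + norm b)" using Lt by (intro mult_left_mono norm_triangle_ineq4) auto
    finally show "norm (g a u - g a b) \<le> Lt * norm u + Lt * norm b" by (simp add: algebra_simps)
  qed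
  also have "\<dots> = Lt * ((\<integral>u. norm u \<partial>\<mu>) + norm b)"
  proof -
    interpret prob_space \<mu> by (rule \<mu>p)
    have "(\<integral>u. Lt * norm u + Lt * norm b \<partial>\<mu>) = (\<integral>u. Lt * norm u \<partial>\<mu>) + (\<integral>u. Lt * norm b \<partial>\<mu>)"
      by (rule Bochner_Integration.integral_add) (use norm_int in auto)
    then show ?thesis by (simp add: prob_space algebra_simps)
  qed
  finally show ?thesis .
qed

lemma cmean_lip: "norm (cmean \<mu> g a - cmean \<mu> g a') \<le> Lt * norm (a - a')"
proof -
  have "cmean \<mu> g a - cmean \<mu> g a' = (\<integral>u. g a u - g a' u \<partial>\<mu>)"
    unfolding cmean_def by (subst Bochner_Integration.integral_diff[OF g_int g_int]) simp
  also have "norm \<dots> \<le> (\<integral>u. norm (g a u - g a' u) \<partial>\<mu>)" by (rule integral_norm_bound)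
  also have "\<dots> \<le> (\<integral>u. Lt * norm (a - a') \<partial>\<mu>)"
  proof (rule integral_mono)
    show "integrable \<mu> (\<lambda>u. norm (g a u - g a' u))" by (intro integrable_norm Bochner_Integration.integrable_diff g_int)
    show "integrable \<mu> (\<lambda>u. Lt * norm (a - a'))"
    proof -
      interpret prob_space \<mu> by (rule \<mu>p)
      show ?thesis by simp
    qed
    fix u show "norm (g a u - g a' u) \<le> Lt * norm (a - a')" using lip[of a u a' u] by simp
  qed
  also have "\<dots> = Lt * norm (a - a')" using prob_space.prob_space[OF \<mu>p] by simp
  finally show ?thesis .
qed

end

context
  fixes \<mu> :: "'a::euclidean_space measure" and g :: "'a \<Rightarrow> 'a \<Rightarrow> 'a" and Lt B :: real
  assumes \<mu>p: "prob_space \<mu>" and \<mu>s: "sets \<mu> = sets borel"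
    and lip: "\<And>x y x' y'. norm (g x y - g x' y') \<le> Lt * (norm (x - x') + norm (y - y'))"
    and Lt: "Lt \<ge> 0"
    and mom: "integrable \<mu> (\<lambda>u. (norm u)\<^sup>2)" and momB: "(\<integral>u. (norm u)\<^sup>2 \<partial>\<mu>) \<le> B"
  fixes I :: "nat set"
begin

lemma ab_le_sq: "(x::real) \<ge> 0 \<Longrightarrow> y \<ge> 0 \<Longrightarrow> x * y \<le> x\<^sup>2 + y\<^sup>2"
  by (metis add_increasing add_increasing2 mult_mono' nle_le power2_eq_square zero_le_power2)

lemma cmean_meas'[measurable]: "f \<in> borel_measurable M \<Longrightarrow> (\<lambda>x. cmean \<mu> g (f x)) \<in> borel_measurable M"
proof -
  assume f: "f \<in> borel_measurable M"
  have "Lt-lipschitz_on UNIV (cmean \<mu> g)"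
  proof (rule lipschitz_onI)
    fix x y show "dist (cmean \<mu> g x) (cmean \<mu> g y) \<le> Lt * dist x y"
      unfolding dist_norm by (rule cmean_lip[OF \<mu>p \<mu>s lip Lt mom momB])
  qed (rule Lt)
  then have "continuous_on UNIV (cmean \<mu> g)" by (rule lipschitz_on_continuous_on)
  then have "cmean \<mu> g \<in> borel_measurable borel" by (rule borel_measurable_continuous_onI)
  from measurable_compose[OF f this] show ?thesis by (simp add: comp_def)
qed

lemma PM_prob: "prob_space (PiM I (\<lambda>_. \<mu>))"
  by (rule prob_space_PiM) (rule \<mu>p)

lemma PM_pps: "product_prob_space (\<lambda>_. \<mu>)"
  using \<mu>p by (simp add: product_prob_space_def product_prob_space_axioms_def product_sigma_finite_def
     prob_space_imp_sigma_finite)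

lemma comp_meas[measurable]: "j \<in> I \<Longrightarrow> (\<lambda>y. y j) \<in> borel_measurable (PiM I (\<lambda>_. \<mu>))"
proof -
  assume j: "j \<in> I"
  have "(\<lambda>y. y j) \<in> measurable (PiM I (\<lambda>_. \<mu>)) \<mu>" using j by (rule measurable_component_singleton)
  then show ?thesis by (metis measurable_cong_sets[OF refl \<mu>s])
qed

lemma comp_meas_mu: "j \<in> I \<Longrightarrow> (\<lambda>y. y j) \<in> measurable (PiM I (\<lambda>_. \<mu>)) \<mu>"
  using measurable_component_singleton[of j I "\<lambda>_. \<mu>"] by auto

lemma comp_integrable:
  fixes f :: "'a \<Rightarrow> 'b::{banach,second_countable_topology}"
  assumes j: "j \<in> I" and f: "f \<in> borel_measurable borel"
  shows "integrable (PiM I (\<lambda>_. \<mu>)) (\<lambda>y. f (y j)) \<longleftrightarrow> integrable \<mu> f"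
proof -
  have fm: "f \<in> borel_measurable \<mu>" using f measurable_cong_sets[OF \<mu>s refl] by auto
  have "distr (PiM I (\<lambda>_. \<mu>)) \<mu> (\<lambda>y. y j) = \<mu>"
    by (rule distr_PiM_component) (use \<mu>p j in auto)
  then show ?thesis
    using integrable_distr_eq[OF comp_meas_mu[OF j] fm] by simp
qed

lemma comp_integral:
  fixes f :: "'a \<Rightarrow> 'b::{banach,second_countable_topology}"
  assumes j: "j \<in> I" and f: "f \<in> borel_measurable borel"
  shows "(\<integral>y. f (y j) \<partial>PiM I (\<lambda>_. \<mu>)) = (\<integral>u. f u \<partial>\<mu>)"
proof -
  have fm: "f \<in> borel_measurable \<mu>" using f measurable_cong_sets[OF \<mu>s refl] by auto
  have "distr (PiM I (\<lambda>_. \<mu>)) \<mu> (\<lambda>y. y j) = \<mu>"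
    by (rule distr_PiM_component) (use \<mu>p j in auto)
  then show ?thesis
    using integral_distr[OF comp_meas_mu[OF j] fm] by simp
qed

definition "m1 = (\<integral>u. norm u \<partial>\<mu>)"

lemma w_bound: "norm (cmean \<mu> g a - g a b) \<le> Lt * (m1 + norm b)"
  unfolding m1_def by (rule cmean_bound[OF \<mu>p \<mu>s lip Lt mom momB])

lemma m1_nn: "0 \<le> m1" unfolding m1_def by simp

lemma w_sq_bound: "(norm (cmean \<mu> g a - g a b))\<^sup>2 \<le> 2 * Lt\<^sup>2 * (m1\<^sup>2 + (norm b)\<^sup>2)"
proof -
  have "(norm (cmean \<mu> g a - g a b))\<^sup>2 \<le> (Lt * (m1 + norm b))\<^sup>2"
    using w_bound by (intro power_mono) auto
  also have "\<dots> = Lt\<^sup>2 * (m1 + norm b)\<^sup>2" by (simp add: power_mult_distrib)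
  also have "(m1 + norm b)\<^sup>2 \<le> 2 * (m1\<^sup>2 + (norm b)\<^sup>2)"
  proof -
    have "0 \<le> (m1 - norm b)\<^sup>2" by simp
    then show ?thesis by (simp add: power2_diff power2_sum algebra_simps)
  qed
  then have "Lt\<^sup>2 * (m1 + norm b)\<^sup>2 \<le> Lt\<^sup>2 * (2 * (m1\<^sup>2 + (norm b)\<^sup>2))"
    by (intro mult_left_mono) auto
  finally show ?thesis by (simp add: algebra_simps)
qed

lemma w_meas[measurable]:
  assumes "i \<in> I" "j \<in> I"
  shows "(\<lambda>y. cmean \<mu> g (y i) - g (y i) (y j)) \<in> borel_measurable (PiM I (\<lambda>_. \<mu>))"
  using assms by (intro borel_measurable_diff cmean_meas' g_meas[OF \<mu>p \<mu>s lip Lt mom momB] comp_meas)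

lemma w_sq_int:
  assumes "i \<in> I" "j \<in> I"
  shows "integrable (PiM I (\<lambda>_. \<mu>)) (\<lambda>y. (norm (cmean \<mu> g (y i) - g (y i) (y j)))\<^sup>2)"
proof (rule Bochner_Integration.integrable_bound)
  interpret P: prob_space "PiM I (\<lambda>_. \<mu>)" by (rule PM_prob)
  have "integrable (PiM I (\<lambda>_. \<mu>)) (\<lambda>y. (norm (y j))\<^sup>2)"
    using comp_integrable[OF assms(2), of "\<lambda>u. (norm u)\<^sup>2"] mom by simp
  then show "integrable (PiM I (\<lambda>_. \<mu>)) (\<lambda>y. 2 * Lt\<^sup>2 * (m1\<^sup>2 + (norm (y j))\<^sup>2))"
    by (intro integrable_mult_right Bochner_Integration.integrable_add) auto
  show "(\<lambda>y. (norm (cmean \<mu> g (y i) - g (y i) (y j)))\<^sup>2) \<in> borel_measurable (PiM I (\<lambda>_. \<mu>))"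
    using measurable_compose[OF w_meas[OF assms], of "\<lambda>v. (norm v)\<^sup>2"] by simp
  show "AE y in PiM I (\<lambda>_. \<mu>). norm ((norm (cmean \<mu> g (y i) - g (y i) (y j)))\<^sup>2) \<le>
      norm (2 * Lt\<^sup>2 * (m1\<^sup>2 + (norm (y j))\<^sup>2))"
  proof (rule AE_I2)
    fix y :: "nat \<Rightarrow> 'a"
    have "0 \<le> 2 * Lt\<^sup>2 * (m1\<^sup>2 + (norm (y j))\<^sup>2)" by simp
    then show "norm ((norm (cmean \<mu> g (y i) - g (y i) (y j)))\<^sup>2) \<le> norm (2 * Lt\<^sup>2 * (m1\<^sup>2 + (norm (y j))\<^sup>2))"
      using w_sq_bound[of "y i" "y j"] by simp
  qed
qed

lemma w_sq_E:
  assumes "i \<in> I" "j \<in> I"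
  shows "(\<integral>y. (norm (cmean \<mu> g (y i) - g (y i) (y j)))\<^sup>2 \<partial>PiM I (\<lambda>_. \<mu>)) \<le> 4 * Lt\<^sup>2 * B"
proof -
  interpret P: prob_space "PiM I (\<lambda>_. \<mu>)" by (rule PM_prob)
  have ij: "integrable (PiM I (\<lambda>_. \<mu>)) (\<lambda>y. (norm (y j))\<^sup>2)"
    using comp_integrable[OF assms(2), of "\<lambda>u. (norm u)\<^sup>2"] mom by simp
  have "(\<integral>y. (norm (cmean \<mu> g (y i) - g (y i) (y j)))\<^sup>2 \<partial>PiM I (\<lambda>_. \<mu>))
      \<le> (\<integral>y. 2 * Lt\<^sup>2 * (m1\<^sup>2 + (norm (y j))\<^sup>2) \<partial>PiM I (\<lambda>_. \<mu>))"
    using w_sq_int[OF assms] ij w_sq_bound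
    by (intro integral_mono) (auto intro!: integrable_mult_right Bochner_Integration.integrable_add)
  also have "\<dots> = 2 * Lt\<^sup>2 * (m1\<^sup>2 + (\<integral>y. (norm (y j))\<^sup>2 \<partial>PiM I (\<lambda>_. \<mu>)))"
    using ij by (simp add: P.prob_space)
  also have "(\<integral>y. (norm (y j))\<^sup>2 \<partial>PiM I (\<lambda>_. \<mu>)) = (\<integral>u. (norm u)\<^sup>2 \<partial>\<mu>)"
    using comp_integral[OF assms(2), of "\<lambda>u. (norm u)\<^sup>2"] by simp
  also have "2 * Lt\<^sup>2 * (m1\<^sup>2 + (\<integral>u. (norm u)\<^sup>2 \<partial>\<mu>)) \<le> 2 * Lt\<^sup>2 * (B + B)"
    using m1_sq[OF \<mu>p \<mu>s lip Lt mom momB] momB unfolding m1_def[symmetric]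
    by (intro mult_left_mono add_mono) auto
  finally show ?thesis by simp
qed

lemma ip_int:
  assumes "i \<in> I" "j \<in> I" "k \<in> I"
  shows "integrable (PiM I (\<lambda>_. \<mu>))
     (\<lambda>y. (cmean \<mu> g (y i) - g (y i) (y j)) \<bullet> (cmean \<mu> g (y i) - g (y i) (y k)))"
proof (rule Bochner_Integration.integrable_bound)
  show "integrable (PiM I (\<lambda>_. \<mu>)) (\<lambda>y. (norm (cmean \<mu> g (y i) - g (y i) (y j)))\<^sup>2 +
       (norm (cmean \<mu> g (y i) - g (y i) (y k)))\<^sup>2)"
    using w_sq_int[of i j] w_sq_int[of i k] assms by (intro Bochner_Integration.integrable_add) auto
  show "(\<lambda>y. (cmean \<mu> g (y i) - g (y i) (y j)) \<bullet> (cmean \<mu> g (y i) - g (y i) (y k))) \<in> borel_measurable (PiM I (\<lambda>_. \<mu>))"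
    using w_meas[of i j] w_meas[of i k] assms by (intro borel_measurable_inner) auto
  show "AE y in PiM I (\<lambda>_. \<mu>). norm ((cmean \<mu> g (y i) - g (y i) (y j)) \<bullet> (cmean \<mu> g (y i) - g (y i) (y k)))
      \<le> norm ((norm (cmean \<mu> g (y i) - g (y i) (y j)))\<^sup>2 + (norm (cmean \<mu> g (y i) - g (y i) (y k)))\<^sup>2)"
  proof (rule AE_I2)
    fix y :: "nat \<Rightarrow> 'a"
    define a where "a = cmean \<mu> g (y i) - g (y i) (y j)"
    define b where "b = cmean \<mu> g (y i) - g (y i) (y k)"
    have "\<bar>a \<bullet> b\<bar> \<le> norm a * norm b" by (rule Cauchy_Schwarz_ineq2)
    also have "\<dots> \<le> (norm a)\<^sup>2 + (norm b)\<^sup>2"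
      using ab_le_sq[of "norm a" "norm b"] by simp
    finally show "norm (a \<bullet> b) \<le> norm ((norm a)\<^sup>2 + (norm b)\<^sup>2)" by simp
  qed
qed

lemma orth:
  assumes fin: "finite I" and ijk: "i \<in> I" "j \<in> I" "k \<in> I" and kj: "k \<noteq> j" and ki: "k \<noteq> i"
  shows "(\<integral>y. (cmean \<mu> g (y i) - g (y i) (y j)) \<bullet> (cmean \<mu> g (y i) - g (y i) (y k)) \<partial>PiM I (\<lambda>_. \<mu>)) = 0"
proof -
  interpret P: product_prob_space "\<lambda>_. \<mu>" I by (rule PM_pps)
  define f where "f y = (cmean \<mu> g (y i) - g (y i) (y j)) \<bullet> (cmean \<mu> g (y i) - g (y i) (y k))" for y :: "nat \<Rightarrow> 'a"
  have fint: "integrable (PiM (insert k (I - {k})) (\<lambda>_. \<mu>)) f"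
    using ip_int[OF ijk] unfolding f_def by (simp only: insert_Diff[OF ijk(3)])
  have "(\<integral>y. f y \<partial>PiM I (\<lambda>_. \<mu>)) = (\<integral>y. f y \<partial>PiM (insert k (I - {k})) (\<lambda>_. \<mu>))"
    by (simp only: insert_Diff[OF ijk(3)])
  also have "\<dots> = (\<integral>x. (\<integral>t. f (x(k := t)) \<partial>\<mu>) \<partial>PiM (I - {k}) (\<lambda>_. \<mu>))"
    by (rule P.product_integral_insert) (use fin fint in auto)
  also have "\<dots> = (\<integral>x. 0 \<partial>PiM (I - {k}) (\<lambda>_. \<mu>))"
  proof (rule Bochner_Integration.integral_cong[OF refl])
    fix x :: "nat \<Rightarrow> 'a"
    define a where "a = cmean \<mu> g (x i) - g (x i) (x j)"
    have ci: "integrable \<mu> (\<lambda>t. cmean \<mu> g (x i))"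
      using \<mu>p by (simp add: prob_space.finite_measure finite_measure.integrable_const)
    note gi = Bochner_Integration.integrable_diff[OF ci g_int[OF \<mu>p \<mu>s lip Lt mom momB, of "x i"]]
    have fe: "(\<lambda>t. f (x(k := t))) = (\<lambda>t. a \<bullet> (cmean \<mu> g (x i) - g (x i) t))"
      unfolding f_def a_def using kj ki by simp
    have "(\<integral>t. f (x(k := t)) \<partial>\<mu>) = a \<bullet> (\<integral>t. cmean \<mu> g (x i) - g (x i) t \<partial>\<mu>)"
      unfolding fe by (rule integral_inner_right, rule gi)
    also have "(\<integral>t. cmean \<mu> g (x i) - g (x i) t \<partial>\<mu>) = 0"
      by (subst Bochner_Integration.integral_diff[OF ci g_int[OF \<mu>p \<mu>s lip Lt mom momB, of "x i"]])
         (simp add: prob_space.prob_space[OF \<mu>p] cmean_def)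
    finally show "(\<integral>t. f (x(k := t)) \<partial>\<mu>) = 0" by (simp only: inner_zero_right)
  qed
  finally show ?thesis unfolding f_def by simp
qed

lemma core:
  assumes I: "I = {..<N}" and i: "i < N"
  shows "(\<integral>\<^sup>+y. ennreal (norm (cmean \<mu> g (y i) - (1 / real N) *\<^sub>R (\<Sum>j<N. g (y i) (y j)))) \<partial>PiM I (\<lambda>_. \<mu>))
      \<le> ennreal (2 * Lt * sqrt B / sqrt N)"
proof -
  interpret P: prob_space "PiM I (\<lambda>_. \<mu>)" by (rule PM_prob)
  have Npos: "real N > 0" using i by simp
  have iI: "i \<in> I" using I i by simp
  define w where "w j y = cmean \<mu> g (y i) - g (y i) (y j)" for j and y :: "nat \<Rightarrow> 'a"
  define S where "S y = (\<Sum>j<N. w j y)" for y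
  have expr: "cmean \<mu> g (y i) - (1 / real N) *\<^sub>R (\<Sum>j<N. g (y i) (y j)) = (1 / real N) *\<^sub>R S y" for y
    unfolding S_def w_def using Npos by (simp add: sum_subtractf scaleR_diff_right sum_constant_scaleR)
  have wm: "j < N \<Longrightarrow> w j \<in> borel_measurable (PiM I (\<lambda>_. \<mu>))" for j
    unfolding w_def[abs_def] using w_meas[of i j] iI I by simp
  have Sm: "S \<in> borel_measurable (PiM I (\<lambda>_. \<mu>))"
    unfolding S_def[abs_def] using wm by (intro borel_measurable_sum) auto
  have ipi: "j < N \<Longrightarrow> k < N \<Longrightarrow> integrable (PiM I (\<lambda>_. \<mu>)) (\<lambda>y. w j y \<bullet> w k y)" for j k
    unfolding w_def using ip_int[of i j k] iI I by simp
  have nS2: "(norm (S y))\<^sup>2 = (\<Sum>j<N. \<Sum>k<N. w j y \<bullet> w k y)" for y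
    unfolding S_def power2_norm_eq_inner by (simp add: inner_sum_left inner_sum_right) (rule sum.swap)
  have iS2: "integrable (PiM I (\<lambda>_. \<mu>)) (\<lambda>y. (norm (S y))\<^sup>2)"
    unfolding nS2 using ipi by (intro Bochner_Integration.integrable_sum) auto
  have diag: "(\<Sum>k<N. (\<integral>y. w j y \<bullet> w k y \<partial>PiM I (\<lambda>_. \<mu>))) = (\<integral>y. (norm (w j y))\<^sup>2 \<partial>PiM I (\<lambda>_. \<mu>))"
    if j: "j < N" for j
  proof -
    have "(\<Sum>k<N. (\<integral>y. w j y \<bullet> w k y \<partial>PiM I (\<lambda>_. \<mu>))) =
        (\<Sum>k<N. if k = j then (\<integral>y. w j y \<bullet> w j y \<partial>PiM I (\<lambda>_. \<mu>)) else 0)"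
    proof (rule sum.cong[OF refl])
      fix k assume k: "k \<in> {..<N}"
      show "(\<integral>y. w j y \<bullet> w k y \<partial>PiM I (\<lambda>_. \<mu>)) = (if k = j then (\<integral>y. w j y \<bullet> w j y \<partial>PiM I (\<lambda>_. \<mu>)) else 0)"
      proof (cases "k = j")
        case False
        show ?thesis
        proof (cases "k = i")
          case False
          then show ?thesis using orth[of i j k] \<open>k \<noteq> j\<close> I k j i unfolding w_def by simp
        next
          case True
          then have "j \<noteq> i" using \<open>k \<noteq> j\<close> by simp
          then have "(\<integral>y. w k y \<bullet> w j y \<partial>PiM I (\<lambda>_. \<mu>)) = 0"
            using orth[of i k j] \<open>k \<noteq> j\<close> I k j i unfolding w_def by simp
          then show ?thesis using \<open>k \<noteq> j\<close> by (simp add: inner_commute)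
        qed
      qed simp
    qed
    also have "\<dots> = (\<integral>y. w j y \<bullet> w j y \<partial>PiM I (\<lambda>_. \<mu>))" using j by simp
    finally show ?thesis by (simp add: power2_norm_eq_inner)
  qed
  have ES2: "(\<integral>y. (norm (S y))\<^sup>2 \<partial>PiM I (\<lambda>_. \<mu>)) \<le> real N * (4 * Lt\<^sup>2 * B)"
  proof -
    have "(\<integral>y. (norm (S y))\<^sup>2 \<partial>PiM I (\<lambda>_. \<mu>)) = (\<Sum>j<N. \<Sum>k<N. (\<integral>y. w j y \<bullet> w k y \<partial>PiM I (\<lambda>_. \<mu>)))"
    proof -
      have "(\<integral>y. (\<Sum>j<N. \<Sum>k<N. w j y \<bullet> w k y) \<partial>PiM I (\<lambda>_. \<mu>)) =
          (\<Sum>j<N. (\<integral>y. (\<Sum>k<N. w j y \<bullet> w k y) \<partial>PiM I (\<lambda>_. \<mu>)))"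
        by (rule Bochner_Integration.integral_sum) (use ipi in \<open>auto intro!: Bochner_Integration.integrable_sum\<close>)
      also have "\<dots> = (\<Sum>j<N. \<Sum>k<N. (\<integral>y. w j y \<bullet> w k y \<partial>PiM I (\<lambda>_. \<mu>)))"
        by (intro sum.cong refl Bochner_Integration.integral_sum) (use ipi in auto)
      finally show ?thesis unfolding nS2 .
    qed
    also have "\<dots> = (\<Sum>j<N. (\<integral>y. (norm (w j y))\<^sup>2 \<partial>PiM I (\<lambda>_. \<mu>)))"
      using diag by simp
    also have "\<dots> \<le> (\<Sum>j<N. 4 * Lt\<^sup>2 * B)"
      unfolding w_def using w_sq_E[of i] iI I by (intro sum_mono) auto
    finally show ?thesis by simp
  qed
  have nSm: "(\<lambda>y. norm (S y)) \<in> borel_measurable (PiM I (\<lambda>_. \<mu>))" using Sm by simp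
  have nSi: "integrable (PiM I (\<lambda>_. \<mu>)) (\<lambda>y. norm (S y))"
    using P.jensen_sq(1)[OF nSm] iS2 by simp
  have "(\<integral>y. norm (S y) \<partial>PiM I (\<lambda>_. \<mu>))\<^sup>2 \<le> real N * (4 * Lt\<^sup>2 * B)"
    using P.jensen_sq(2)[OF nSm] iS2 ES2 by simp
  then have ES: "(\<integral>y. norm (S y) \<partial>PiM I (\<lambda>_. \<mu>)) \<le> sqrt (real N * (4 * Lt\<^sup>2 * B))"
    by (rule real_le_rsqrt)
  also have "sqrt (real N * (4 * Lt\<^sup>2 * B)) = 2 * Lt * sqrt N * sqrt B"
    using Lt by (simp add: real_sqrt_mult)
  finally have ES': "(\<integral>y. norm (S y) \<partial>PiM I (\<lambda>_. \<mu>)) / real N \<le> 2 * Lt * sqrt B / sqrt N"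
  proof -
    assume h: "(\<integral>y. norm (S y) \<partial>PiM I (\<lambda>_. \<mu>)) \<le> 2 * Lt * sqrt (real N) * sqrt B"
    have "(\<integral>y. norm (S y) \<partial>PiM I (\<lambda>_. \<mu>)) / real N \<le> 2 * Lt * sqrt (real N) * sqrt B / real N"
      using h Npos by (simp add: divide_right_mono)
    also have "2 * Lt * sqrt (real N) * sqrt B / real N = 2 * Lt * sqrt B / sqrt N"
      using Npos by (simp add: field_simps)
    finally show ?thesis .
  qed
  have "(\<integral>\<^sup>+y. ennreal (norm (cmean \<mu> g (y i) - (1 / real N) *\<^sub>R (\<Sum>j<N. g (y i) (y j)))) \<partial>PiM I (\<lambda>_. \<mu>))
      = (\<integral>\<^sup>+y. ennreal (norm (S y) / real N) \<partial>PiM I (\<lambda>_. \<mu>))"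
    unfolding expr using Npos by (simp add: divide_inverse mult.commute)
  also have "\<dots> = ennreal (\<integral>y. norm (S y) / real N \<partial>PiM I (\<lambda>_. \<mu>))"
    using nSi by (intro nn_integral_eq_integral) auto
  also have "(\<integral>y. norm (S y) / real N \<partial>PiM I (\<lambda>_. \<mu>)) = (\<integral>y. norm (S y) \<partial>PiM I (\<lambda>_. \<mu>)) / real N"
    by simp
  finally show ?thesis using ES' by (simp add: ennreal_leI order_trans)
qed

end

lemma deriv_from_quadratic:
  fixes f :: "'a::real_normed_vector \<Rightarrow> 'b::real_normed_vector"
  assumes bl: "bounded_linear D" and q: "\<And>z. norm (f z - f x - D (z - x)) \<le> C * (norm (z - x))\<^sup>2"
  shows "(f has_derivative D) (at x)"
  unfolding has_derivative_at
proof (intro conjI bl, rule Lim_null_comparison)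
  show "\<forall>\<^sub>F h in at 0. norm (norm (f (x + h) - f x - D h) / norm h) \<le> C * norm h"
  proof (rule always_eventually, rule allI)
    fix h :: 'a
    show "norm (norm (f (x + h) - f x - D h) / norm h) \<le> C * norm h"
    proof (cases "h = 0")
      case True then show ?thesis by simp
    next
      case False
      have "norm (f (x + h) - f x - D h) \<le> C * (norm h)\<^sup>2" using q[of "x + h"] by simp
      then show ?thesis using False by (simp add: divide_le_eq power2_eq_square mult.assoc)
    qed
  qed
  show "((\<lambda>h. C * norm h) \<longlongrightarrow> 0) (at (0::'a))"
    by (auto intro!: tendsto_eq_intros)
qed

lemma W_quad:
  fixes W :: "'a::euclidean_space \<Rightarrow> 'a \<Rightarrow> real" and g1W :: "'a \<Rightarrow> 'a \<Rightarrow> 'a"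
  assumes grad1W: "\<And>x y. ((\<lambda>z. W z y) has_derivative (\<lambda>h. g1W x y \<bullet> h)) (at x)"
    and lip: "\<And>x y x' y'. norm (g1W x y - g1W x' y') \<le> Lt * (norm (x - x') + norm (y - y'))"
    and Lt: "Lt \<ge> 0"
  shows "\<bar>W z y - W x y - g1W x y \<bullet> (z - x)\<bar> \<le> Lt * (norm (z - x))\<^sup>2"
proof -
  let ?S = "cball x (norm (z - x))"
  have "norm ((\<lambda>u. W u y) z - (\<lambda>u. W u y) x - (\<lambda>h. g1W x y \<bullet> h) (z - x)) \<le> norm (z - x) * (Lt * norm (z - x))"
  proof (rule differentiable_bound_linearization[where S = ?S and f' = "\<lambda>u h. g1W u y \<bullet> h"])
    fix t :: real assume t: "t \<in> {0..1}"
    have "dist x (x + t *\<^sub>R (z - x)) = \<bar>t\<bar> * norm (z - x)" by (simp add: dist_norm)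
    also have "\<dots> \<le> norm (z - x)" using t by (auto intro: mult_left_le_one_le)
    finally show "x + t *\<^sub>R (z - x) \<in> ?S" by simp
  next
    fix u assume "u \<in> ?S"
    show "((\<lambda>u. W u y) has_derivative (\<lambda>h. g1W u y \<bullet> h)) (at u within ?S)"
      by (rule has_derivative_at_withinI[OF grad1W])
  next
    fix u assume u: "u \<in> ?S"
    show "onorm ((\<lambda>h. g1W u y \<bullet> h) - (\<lambda>h. g1W x y \<bullet> h)) \<le> Lt * norm (z - x)"
    proof (rule onorm_le)
      fix h :: 'a
      have "norm (((\<lambda>h. g1W u y \<bullet> h) - (\<lambda>h. g1W x y \<bullet> h)) h) = \<bar>(g1W u y - g1W x y) \<bullet> h\<bar>"
        by (simp add: inner_diff_left)
      also have "\<dots> \<le> norm (g1W u y - g1W x y) * norm h" by (rule Cauchy_Schwarz_ineq2)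
      also have "norm (g1W u y - g1W x y) \<le> Lt * norm (z - x)"
      proof -
        have "norm (g1W u y - g1W x y) \<le> Lt * (norm (u - x) + norm (y - y))" by (rule lip)
        also have "\<dots> \<le> Lt * norm (z - x)"
          using u Lt by (intro mult_left_mono) (auto simp: dist_norm norm_minus_commute)
        finally show ?thesis .
      qed
      then have "norm (g1W u y - g1W x y) * norm h \<le> Lt * norm (z - x) * norm h"
        by (intro mult_right_mono) auto
      finally show "norm (((\<lambda>h. g1W u y \<bullet> h) - (\<lambda>h. g1W x y \<bullet> h)) h) \<le> Lt * norm (z - x) * norm h" .
    qed
  qed simp
  then show ?thesis by (simp add: power2_eq_square algebra_simps)
qed

lemma W_diag_deriv:
  fixes W :: "'a::euclidean_space \<Rightarrow> 'a \<Rightarrow> real" and g1W :: "'a \<Rightarrow> 'a \<Rightarrow> 'a"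
  assumes grad1W: "\<And>x y. ((\<lambda>z. W z y) has_derivative (\<lambda>h. g1W x y \<bullet> h)) (at x)"
    and lip: "\<And>x y x' y'. norm (g1W x y - g1W x' y') \<le> Lt * (norm (x - x') + norm (y - y'))"
    and Lt: "Lt \<ge> 0" and sym: "\<And>x y. W x y = W y x"
  shows "((\<lambda>z. W z z) has_derivative (\<lambda>h. (2 *\<^sub>R g1W x x) \<bullet> h)) (at x)"
proof (rule deriv_from_quadratic[where C = "3 * Lt"])
  show "bounded_linear (\<lambda>h. (2 *\<^sub>R g1W x x) \<bullet> h)" by (rule bounded_linear_inner_right)
  fix z
  have e: "W z z - W x x - (2 *\<^sub>R g1W x x) \<bullet> (z - x) =
      (W z z - W x z - g1W x z \<bullet> (z - x)) + (g1W x z - g1W x x) \<bullet> (z - x) + (W z x - W x x - g1W x x \<bullet> (z - x))"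
    using sym[of x z] by (simp add: algebra_simps inner_diff_left)
  have b1: "\<bar>W z z - W x z - g1W x z \<bullet> (z - x)\<bar> \<le> Lt * (norm (z - x))\<^sup>2"
    by (rule W_quad[OF grad1W lip Lt])
  have b3: "\<bar>W z x - W x x - g1W x x \<bullet> (z - x)\<bar> \<le> Lt * (norm (z - x))\<^sup>2"
    by (rule W_quad[OF grad1W lip Lt])
  have b2: "\<bar>(g1W x z - g1W x x) \<bullet> (z - x)\<bar> \<le> Lt * (norm (z - x))\<^sup>2"
  proof -
    have "\<bar>(g1W x z - g1W x x) \<bullet> (z - x)\<bar> \<le> norm (g1W x z - g1W x x) * norm (z - x)" by (rule Cauchy_Schwarz_ineq2)
    also have "norm (g1W x z - g1W x x) \<le> Lt * norm (z - x)" using lip[of x z x x] by simp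
    then have "norm (g1W x z - g1W x x) * norm (z - x) \<le> Lt * norm (z - x) * norm (z - x)"
      by (intro mult_right_mono) auto
    finally show ?thesis by (simp add: power2_eq_square mult.assoc)
  qed
  show "norm (W z z - W x x - (2 *\<^sub>R g1W x x) \<bullet> (z - x)) \<le> 3 * Lt * (norm (z - x))\<^sup>2"
    unfolding e real_norm_def using b1 b2 b3 by linarith
qed

lemma G_formula:
  fixes V :: "'a::euclidean_space \<Rightarrow> real" and gV :: "'a \<Rightarrow> 'a"
    and W :: "'a \<Rightarrow> 'a \<Rightarrow> real" and g1W :: "'a \<Rightarrow> 'a \<Rightarrow> 'a"
    and G :: "(nat \<Rightarrow> 'a) \<Rightarrow> nat \<Rightarrow> 'a"
  assumes gradV: "\<And>x. (V has_derivative (\<lambda>h. gV x \<bullet> h)) (at x)"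
    and grad1W: "\<And>x y. ((\<lambda>z. W z y) has_derivative (\<lambda>h. g1W x y \<bullet> h)) (at x)"
    and lip: "\<And>x y x' y'. norm (g1W x y - g1W x' y') \<le> Lt * (norm (x - x') + norm (y - y'))"
    and Lt: "Lt \<ge> 0" and sym: "\<And>x y. W x y = W y x"
    and gradU: "\<And>y i. i < N \<Longrightarrow>
        ((\<lambda>z. U_pot N \<epsilon> V W (y(i := z))) has_derivative (\<lambda>h. G y i \<bullet> h)) (at (y i))"
    and i: "i < N"
  shows "G y i = gV (y i) + (\<epsilon> / real N) *\<^sub>R (\<Sum>j<N. g1W (y i) (y j))"
proof -
  define dV where "dV k = (if k = i then gV (y i) else 0)" for k
  define d where "d k j = (if k = i then g1W (y i) (y j) else 0) + (if j = i then g1W (y i) (y k) else 0)" for k j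
  have hV: "((\<lambda>z. V ((y(i := z)) k)) has_derivative (\<lambda>h. dV k \<bullet> h)) (at (y i))" for k
  proof (cases "k = i")
    case True then show ?thesis unfolding dV_def using gradV[of "y i"] by simp
  next
    case False then show ?thesis unfolding dV_def using has_derivative_const[of "V (y k)" "at (y i)"] by simp
  qed
  have hW: "((\<lambda>z. W ((y(i := z)) k) ((y(i := z)) j)) has_derivative (\<lambda>h. d k j \<bullet> h)) (at (y i))" for k j
  proof (cases "k = i")
    case True
    show ?thesis
    proof (cases "j = i")
      case True
      have "((\<lambda>z. W z z) has_derivative (\<lambda>h. (2 *\<^sub>R g1W (y i) (y i)) \<bullet> h)) (at (y i))"
        by (rule W_diag_deriv[OF grad1W lip Lt sym])
      then show ?thesis unfolding d_def using \<open>k = i\<close> True by (simp add: scaleR_2 inner_add_left)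
    next
      case False
      then show ?thesis unfolding d_def using \<open>k = i\<close> grad1W[where x="y i" and y="y j"] by simp
    qed
  next
    case False
    show ?thesis
    proof (cases "j = i")
      case True
      have "((\<lambda>z. W z (y k)) has_derivative (\<lambda>h. g1W (y i) (y k) \<bullet> h)) (at (y i))" by (rule grad1W)
      then have "((\<lambda>z. W (y k) z) has_derivative (\<lambda>h. g1W (y i) (y k) \<bullet> h)) (at (y i))"
        by (subst sym) simp
      then show ?thesis unfolding d_def using \<open>k \<noteq> i\<close> True by simp
    next
      case False
      then show ?thesis unfolding d_def using \<open>k \<noteq> i\<close> has_derivative_const[of "W (y k) (y j)" "at (y i)"] by simp
    qed
  qed
  have hU: "((\<lambda>z. U_pot N \<epsilon> V W (y(i := z))) has_derivative
      (\<lambda>h. \<Sum>k<N. dV k \<bullet> h + \<epsilon> / (2 * real N) * (\<Sum>j<N. d k j \<bullet> h))) (at (y i))"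
    unfolding U_pot_def by (intro has_derivative_sum has_derivative_add has_derivative_mult_right hV hW)
  have "(\<lambda>h. G y i \<bullet> h) = (\<lambda>h. \<Sum>k<N. dV k \<bullet> h + \<epsilon> / (2 * real N) * (\<Sum>j<N. d k j \<bullet> h))"
    using gradU[OF i, of y] hU by (simp add: has_derivative_unique)
  moreover have "(\<lambda>h. \<Sum>k<N. dV k \<bullet> h + \<epsilon> / (2 * real N) * (\<Sum>j<N. d k j \<bullet> h))
      = (\<lambda>h. ((\<Sum>k<N. dV k) + (\<epsilon> / (2 * real N)) *\<^sub>R (\<Sum>k<N. \<Sum>j<N. d k j)) \<bullet> h)"
    by (simp add: inner_add_left inner_sum_left sum.distrib sum_distrib_left)
  moreover have "(\<Sum>k<N. dV k) = gV (y i)" unfolding dV_def using i by simp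
  moreover have "(\<Sum>k<N. \<Sum>j<N. d k j) = 2 *\<^sub>R (\<Sum>j<N. g1W (y i) (y j))"
  proof -
    have "(\<Sum>k<N. \<Sum>j<N. d k j) = (\<Sum>k<N. \<Sum>j<N. (if k = i then g1W (y i) (y j) else 0)) +
        (\<Sum>k<N. \<Sum>j<N. (if j = i then g1W (y i) (y k) else 0))"
      unfolding d_def by (simp add: sum.distrib)
    also have "\<dots> = (\<Sum>j<N. g1W (y i) (y j)) + (\<Sum>k<N. g1W (y i) (y k))"
      using i by (simp add: sum.swap[of _ "{..<N}" "{..<N}"] if_distrib cong: if_cong)
    finally show ?thesis by (simp add: scaleR_2)
  qed
  ultimately have eq: "(\<lambda>h. G y i \<bullet> h) = (\<lambda>h. (gV (y i) + (\<epsilon> / real N) *\<^sub>R (\<Sum>j<N. g1W (y i) (y j))) \<bullet> h)"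
    using i by simp
  show ?thesis
  proof -
    define v where "v = gV (y i) + (\<epsilon> / real N) *\<^sub>R (\<Sum>j<N. g1W (y i) (y j))"
    have "G y i \<bullet> (G y i - v) = v \<bullet> (G y i - v)" using fun_cong[OF eq, of "G y i - v"] unfolding v_def by simp
    then have "(G y i - v) \<bullet> (G y i - v) = 0" by (simp add: inner_diff_left)
    then show ?thesis unfolding v_def by simp
  qed
qed

lemma floor_div_tendsto: "(\<lambda>k. real_of_int \<lfloor>real (Suc k) * s\<rfloor> / real (Suc k)) \<longlonglongrightarrow> s"
proof (rule LIM_zero_cancel, rule Lim_null_comparison)
  show "\<forall>\<^sub>F k in sequentially. norm (real_of_int \<lfloor>real (Suc k) * s\<rfloor> / real (Suc k) - s) \<le> inverse (real (Suc k))"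
  proof (rule always_eventually, rule allI)
    fix k
    define n where "n = real (Suc k)"
    define F where "F = real_of_int \<lfloor>n * s\<rfloor>"
    have n: "n > 0" unfolding n_def by simp
    have a: "F \<le> n * s" unfolding F_def by (rule of_int_floor_le)
    have b: "n * s - 1 < F" unfolding F_def by (rule real_of_int_floor_gt_diff_one)
    have "F / n \<le> s" using a n by (simp add: divide_le_eq mult.commute)
    moreover have "s - inverse n \<le> F / n"
    proof -
      have "s - inverse n = (n * s - 1) / n" using n by (simp add: field_simps)
      also have "\<dots> \<le> F / n" using b n by (intro divide_right_mono) auto
      finally show ?thesis .
    qed
    ultimately have "norm (F / n - s) \<le> inverse n" by simp
    then show "norm (real_of_int \<lfloor>real (Suc k) * s\<rfloor> / real (Suc k) - s) \<le> inverse (real (Suc k))"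
      unfolding F_def n_def .
  qed
  show "(\<lambda>k. inverse (real (Suc k))) \<longlonglongrightarrow> 0" by (rule LIMSEQ_inverse_real_of_nat)
qed

lemma carath:
  fixes f :: "real \<Rightarrow> 'm \<Rightarrow> 'b::{metric_space, second_countable_topology}"
  assumes meas: "\<And>t. f t \<in> borel_measurable M"
    and cont: "\<And>\<omega>. \<omega> \<in> space M \<Longrightarrow> continuous_on {0..T} (\<lambda>t. f t \<omega>)"
    and T: "0 \<le> T"
  shows "(\<lambda>p. f (max 0 (min T (fst p))) (snd p)) \<in> borel_measurable (lborel \<Otimes>\<^sub>M M)"
proof -
  define c where "c s = max 0 (min T s)" for s :: real
  have c_in: "c s \<in> {0..T}" for s using T unfolding c_def by auto
  have c_cont: "continuous_on UNIV c" unfolding c_def by (intro continuous_intros)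
  define fn where "fn k p = f (c (real_of_int \<lfloor>real (Suc k) * fst p\<rfloor> / real (Suc k))) (snd p)" for k p
  have fn_meas: "fn k \<in> borel_measurable (lborel \<Otimes>\<^sub>M M)" for k
  proof -
    have m1: "(\<lambda>p. f (c (real_of_int z / real (Suc k))) (snd p)) \<in> borel_measurable (lborel \<Otimes>\<^sub>M M)" for z :: int
      using measurable_compose[OF measurable_snd meas] by simp
    have m2: "(\<lambda>p. \<lfloor>real (Suc k) * fst p\<rfloor>) \<in> measurable (lborel \<Otimes>\<^sub>M M) (count_space UNIV)"
      by measurable
    show ?thesis unfolding fn_def[abs_def]
      using measurable_compose_countable'[where f="\<lambda>(z::int) (p::real \<times> 'm). f (c (real_of_int z / real (Suc k))) (snd p)"
          and g="\<lambda>p::real \<times> 'm. \<lfloor>real (Suc k) * fst p\<rfloor>" and I=UNIV, OF m1 m2] by simp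
  qed
  have "(\<lambda>p. f (c (fst p)) (snd p)) \<in> borel_measurable (lborel \<Otimes>\<^sub>M M)"
  proof (rule borel_measurable_LIMSEQ_metric[OF fn_meas])
    fix p :: "real \<times> 'm" assume p: "p \<in> space (lborel \<Otimes>\<^sub>M M)"
    then have \<omega>: "snd p \<in> space M" by (auto simp: space_pair_measure)
    have "(\<lambda>k. c (real_of_int \<lfloor>real (Suc k) * fst p\<rfloor> / real (Suc k))) \<longlonglongrightarrow> c (fst p)"
      by (rule continuous_on_tendsto_compose[OF c_cont floor_div_tendsto]) auto
    then show "(\<lambda>k. fn k p) \<longlonglongrightarrow> f (c (fst p)) (snd p)"
      unfolding fn_def
      by (rule continuous_on_tendsto_compose[OF cont[OF \<omega>]]) (use T in \<open>auto simp: c_def\<close>)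
  qed
  then show ?thesis unfolding c_def .
qed

lemma distr_pairs:
  fixes A :: "'x measure" and Bm :: "'y measure" and Q :: "'x \<times> 'y \<Rightarrow> 'z" and I :: "'i set"
  assumes A: "prob_space A" and Bm: "prob_space Bm" and Q: "Q \<in> measurable (A \<Otimes>\<^sub>M Bm) M'"
    and fin: "finite I"
  shows "distr (PiM I (\<lambda>_. A) \<Otimes>\<^sub>M PiM I (\<lambda>_. Bm)) (PiM I (\<lambda>_. distr (A \<Otimes>\<^sub>M Bm) M' Q))
           (\<lambda>\<omega>. \<lambda>i\<in>I. Q (fst \<omega> i, snd \<omega> i)) = PiM I (\<lambda>_. distr (A \<Otimes>\<^sub>M Bm) M' Q)"
proof -
  define \<nu> where "\<nu> = distr (A \<Otimes>\<^sub>M Bm) M' Q"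
  interpret A: prob_space A by (rule A)
  interpret B: prob_space Bm by (rule Bm)
  interpret AB: pair_prob_space A Bm ..
  interpret \<nu>: prob_space \<nu> unfolding \<nu>_def by (rule AB.prob_space_distr[OF Q])
  interpret PA: product_prob_space "\<lambda>_. A" I ..
  interpret PB: product_prob_space "\<lambda>_. Bm" I ..
  interpret PN: product_prob_space "\<lambda>_. \<nu>" I ..
  interpret PAs: prob_space "PiM I (\<lambda>_. A)" by (rule prob_space_PiM) (rule A)
  interpret PBs: prob_space "PiM I (\<lambda>_. Bm)" by (rule prob_space_PiM) (rule Bm)
  interpret PAB: pair_prob_space "PiM I (\<lambda>_. A)" "PiM I (\<lambda>_. Bm)" ..
  have sfB: "sigma_finite_measure (PiM I (\<lambda>_. Bm))" by (rule prob_space_imp_sigma_finite, rule prob_space_PiM, rule Bm)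
  have sfb: "sigma_finite_measure Bm" using Bm by (rule prob_space_imp_sigma_finite)
  define \<Phi> where "\<Phi> \<omega> = (\<lambda>i\<in>I. Q (fst \<omega> i, snd \<omega> i))" for \<omega> :: "('i \<Rightarrow> 'x) \<times> ('i \<Rightarrow> 'y)"
  have Qn: "Q \<in> measurable (A \<Otimes>\<^sub>M Bm) \<nu>" unfolding \<nu>_def using Q by simp
  have comp: "(\<lambda>\<omega>. (fst \<omega> i, snd \<omega> i)) \<in> measurable (PiM I (\<lambda>_. A) \<Otimes>\<^sub>M PiM I (\<lambda>_. Bm)) (A \<Otimes>\<^sub>M Bm)"
    if i: "i \<in> I" for i
    using i by measurable
  have \<Phi>m: "\<Phi> \<in> measurable (PiM I (\<lambda>_. A) \<Otimes>\<^sub>M PiM I (\<lambda>_. Bm)) (PiM I (\<lambda>_. \<nu>))"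
    unfolding \<Phi>_def by (intro measurable_restrict measurable_compose[OF comp Qn])
  have "distr (PiM I (\<lambda>_. A) \<Otimes>\<^sub>M PiM I (\<lambda>_. Bm)) (PiM I (\<lambda>_. \<nu>)) \<Phi> = PiM I (\<lambda>_. \<nu>)"
  proof (rule PN.PiM_eqI[OF fin])
    show "sets (distr (PiM I (\<lambda>_. A) \<Otimes>\<^sub>M PiM I (\<lambda>_. Bm)) (PiM I (\<lambda>_. \<nu>)) \<Phi>) = sets (PiM I (\<lambda>_. \<nu>))"
      by simp
    fix S assume S: "\<And>i. i \<in> I \<Longrightarrow> S i \<in> sets \<nu>"
    have SM: "S i \<in> sets M'" if "i \<in> I" for i using S[OF that] unfolding \<nu>_def by simp
    have ind_m: "(\<lambda>p. indicator (S i) (Q p) :: ennreal) \<in> borel_measurable (A \<Otimes>\<^sub>M Bm)" if "i \<in> I" for i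
      using measurable_compose[OF Q borel_measurable_indicator[OF SM[OF that]]] by (simp add: comp_def)
    have "emeasure (distr (PiM I (\<lambda>_. A) \<Otimes>\<^sub>M PiM I (\<lambda>_. Bm)) (PiM I (\<lambda>_. \<nu>)) \<Phi>) (Pi\<^sub>E I S)
        = emeasure (PiM I (\<lambda>_. A) \<Otimes>\<^sub>M PiM I (\<lambda>_. Bm)) (\<Phi> -` Pi\<^sub>E I S \<inter> space (PiM I (\<lambda>_. A) \<Otimes>\<^sub>M PiM I (\<lambda>_. Bm)))"
      using S by (intro emeasure_distr[OF \<Phi>m]) (auto intro!: sets_PiM_I_finite fin)
    also have "\<dots> = (\<integral>\<^sup>+\<omega>. indicator (\<Phi> -` Pi\<^sub>E I S \<inter> space (PiM I (\<lambda>_. A) \<Otimes>\<^sub>M PiM I (\<lambda>_. Bm))) \<omega>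
          \<partial>(PiM I (\<lambda>_. A) \<Otimes>\<^sub>M PiM I (\<lambda>_. Bm)))"
      using S by (intro nn_integral_indicator[symmetric] measurable_sets[OF \<Phi>m]) (auto intro!: sets_PiM_I_finite fin)
    also have "\<dots> = (\<integral>\<^sup>+\<omega>. (\<Prod>i\<in>I. indicator (S i) (Q (fst \<omega> i, snd \<omega> i))) \<partial>(PiM I (\<lambda>_. A) \<Otimes>\<^sub>M PiM I (\<lambda>_. Bm)))"
    proof (rule nn_integral_cong)
      fix \<omega> assume "\<omega> \<in> space (PiM I (\<lambda>_. A) \<Otimes>\<^sub>M PiM I (\<lambda>_. Bm))"
      then show "indicator (\<Phi> -` Pi\<^sub>E I S \<inter> space (PiM I (\<lambda>_. A) \<Otimes>\<^sub>M PiM I (\<lambda>_. Bm))) \<omega> =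
          (\<Prod>i\<in>I. indicator (S i) (Q (fst \<omega> i, snd \<omega> i)) :: ennreal)"
        unfolding \<Phi>_def using fin by (auto simp: indicator_def PiE_iff prod_zero_iff)
    qed
    also have "\<dots> = (\<integral>\<^sup>+x. (\<integral>\<^sup>+v. (\<Prod>i\<in>I. indicator (S i) (Q (x i, v i))) \<partial>PiM I (\<lambda>_. Bm)) \<partial>PiM I (\<lambda>_. A))"
    proof -
      have mf: "(\<lambda>\<omega>. \<Prod>i\<in>I. indicator (S i) (Q (fst \<omega> i, snd \<omega> i)) :: ennreal) \<in> borel_measurable (PiM I (\<lambda>_. A) \<Otimes>\<^sub>M PiM I (\<lambda>_. Bm))"
        using ind_m comp by (intro borel_measurable_prod_ennreal) (auto intro: measurable_compose)
      show ?thesis using sigma_finite_measure.nn_integral_fst[OF sfB mf] by simp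
    qed
    also have "\<dots> = (\<integral>\<^sup>+x. (\<Prod>i\<in>I. (\<integral>\<^sup>+w. indicator (S i) (Q (x i, w)) \<partial>Bm)) \<partial>PiM I (\<lambda>_. A))"
    proof (rule nn_integral_cong)
      fix x assume x: "x \<in> space (PiM I (\<lambda>_. A))"
      show "(\<integral>\<^sup>+v. (\<Prod>i\<in>I. indicator (S i) (Q (x i, v i))) \<partial>PiM I (\<lambda>_. Bm)) = (\<Prod>i\<in>I. (\<integral>\<^sup>+w. indicator (S i) (Q (x i, w)) \<partial>Bm))"
      proof (rule PB.product_nn_integral_prod[OF fin])
        fix i assume i: "i \<in> I"
        have "x i \<in> space A" using x i by (auto simp: space_PiM)
        then show "(\<lambda>w. indicator (S i) (Q (x i, w)) :: ennreal) \<in> borel_measurable Bm"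
          using measurable_Pair2[OF ind_m[OF i]] by simp
      qed
    qed
    also have "\<dots> = (\<Prod>i\<in>I. (\<integral>\<^sup>+y. (\<integral>\<^sup>+w. indicator (S i) (Q (y, w)) \<partial>Bm) \<partial>A))"
    proof (rule PA.product_nn_integral_prod[OF fin])
      fix i assume i: "i \<in> I"
      show "(\<lambda>y. \<integral>\<^sup>+w. indicator (S i) (Q (y, w)) \<partial>Bm) \<in> borel_measurable A"
        using ind_m[OF i] by (intro sigma_finite_measure.borel_measurable_nn_integral[OF sfb]) simp
    qed
    also have "\<dots> = (\<Prod>i\<in>I. emeasure \<nu> (S i))"
    proof (rule prod.cong[OF refl])
      fix i assume i: "i \<in> I"
      have "(\<integral>\<^sup>+y. (\<integral>\<^sup>+w. indicator (S i) (Q (y, w)) \<partial>Bm) \<partial>A) = (\<integral>\<^sup>+p. indicator (S i) (Q p) \<partial>(A \<Otimes>\<^sub>M Bm))"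
        using sigma_finite_measure.nn_integral_fst[OF sfb ind_m[OF i]] by simp
      also have "\<dots> = (\<integral>\<^sup>+z. indicator (S i) z \<partial>\<nu>)"
        unfolding \<nu>_def by (rule nn_integral_distr[OF Q, symmetric]) (use SM[OF i] in simp)
      also have "\<dots> = emeasure \<nu> (S i)" using S[OF i] by simp
      finally show "(\<integral>\<^sup>+y. (\<integral>\<^sup>+w. indicator (S i) (Q (y, w)) \<partial>Bm) \<partial>A) = emeasure \<nu> (S i)" .
    qed
    finally show "emeasure (distr (PiM I (\<lambda>_. A) \<Otimes>\<^sub>M PiM I (\<lambda>_. Bm)) (PiM I (\<lambda>_. \<nu>)) \<Phi>) (Pi\<^sub>E I S) = (\<Prod>i\<in>I. emeasure \<nu> (S i))" .
  qed
  then show ?thesis unfolding \<Phi>_def[abs_def] \<nu>_def .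
qed

lemma norm3: "norm (- a - b - c) \<le> norm a + norm b + norm (c::'b::real_normed_vector)"
  using norm_triangle_ineq4[of "- a - b" c] norm_triangle_ineq4[of "- a" b] by simp

theorem mainTheorem5:
  fixes V :: "'a::euclidean_space \<Rightarrow> real" and gV :: "'a \<Rightarrow> 'a"
    and W :: "'a \<Rightarrow> 'a \<Rightarrow> real" and g1W :: "'a \<Rightarrow> 'a \<Rightarrow> 'a"
    and L K R Lt :: real
    and mu :: "'a measure" and N :: nat and T \<epsilon> B1 :: real
    and qb pb :: "real \<Rightarrow> 'a \<Rightarrow> 'a \<Rightarrow> 'a"
    and q p :: "real \<Rightarrow> (nat \<Rightarrow> 'a) \<Rightarrow> (nat \<Rightarrow> 'a) \<Rightarrow> nat \<Rightarrow> 'a"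
    and G :: "(nat \<Rightarrow> 'a) \<Rightarrow> nat \<Rightarrow> 'a"
  assumes gradV: "\<And>x. (V has_derivative (\<lambda>h. gV x \<bullet> h)) (at x)"
    and grad1W: "\<And>x y. ((\<lambda>z. W z y) has_derivative (\<lambda>h. g1W x y \<bullet> h)) (at x)"
    and cst: "L > 0" "K > 0" "R \<ge> 0" "Lt \<ge> 0"
    and V0: "V 0 = 0" and Vnn: "\<And>x. V x \<ge> 0"
    and gV_lip: "\<And>x y. norm (gV x - gV y) \<le> L * norm (x - y)"
    and gV_conv: "\<And>x y. norm (x - y) \<ge> R \<Longrightarrow>
        (x - y) \<bullet> (gV x - gV y) \<ge> K * (norm (x - y))\<^sup>2 + (norm (gV x - gV y))\<^sup>2 / L"
    and W_sym: "\<And>x y. W x y = W y x"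
    and g1W_lip: "\<And>x y x' y'. norm (g1W x y - g1W x' y') \<le> Lt * (norm (x - x') + norm (y - y'))"
    and mu_prob: "prob_space mu" and mu_sets: "sets mu = sets borel"
    and mu_mom2: "integrable mu (\<lambda>y. (norm y)\<^sup>2)"
    and T_pos: "T > 0" and eps_nn: "\<epsilon> \<ge> 0"
    and step: "(L + 2 * \<epsilon> * Lt) * T\<^sup>2 \<le> 1"
    and qb_meas: "\<And>t. (\<lambda>(y, w). qb t y w) \<in> borel_measurable (mu \<Otimes>\<^sub>M std_gaussian)"
    and qb_init: "\<And>x v. qb 0 x v = x" "\<And>x v. pb 0 x v = v"
    and qb_ode: "\<And>x v t. t \<in> {0..T} \<Longrightarrow>
        ((\<lambda>s. qb s x v) has_vector_derivative pb t x v) (at t within {0..T})"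
    and pb_ode: "\<And>x v t. t \<in> {0..T} \<Longrightarrow>
        ((\<lambda>s. pb s x v) has_vector_derivative
           (- gV (qb t x v) - \<epsilon> *\<^sub>R (\<integral>u. g1W (qb t x v) u \<partial>(nonlin_law mu qb t))))
         (at t within {0..T})"
    and B1_bound: "\<And>t. t \<in> {0..T} \<Longrightarrow>
        (\<integral>\<^sup>+ y. ennreal ((norm y)\<^sup>2) \<partial>(nonlin_law mu qb t)) \<le> ennreal B1"
    and gradU: "\<And>y i. i < N \<Longrightarrow>
        ((\<lambda>z. U_pot N \<epsilon> V W (y(i := z))) has_derivative (\<lambda>h. G y i \<bullet> h)) (at (y i))"
    and q_init: "\<And>x v i. i < N \<Longrightarrow> q 0 x v i = x i" "\<And>x v i. i < N \<Longrightarrow> p 0 x v i = v i"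
    and q_ode: "\<And>x v i t. i < N \<Longrightarrow> t \<in> {0..T} \<Longrightarrow>
        ((\<lambda>s. q s x v i) has_vector_derivative p t x v i) (at t within {0..T})"
    and p_ode: "\<And>x v i t. i < N \<Longrightarrow> t \<in> {0..T} \<Longrightarrow>
        ((\<lambda>s. p s x v i) has_vector_derivative (- G (q t x v) i)) (at t within {0..T})"
  shows "(\<integral>\<^sup>+ z. ennreal ((1 / real N) * (\<Sum>i<N. norm (qb T (fst z i) (snd z i) - q T (fst z) (snd z) i)))
            \<partial>((\<Pi>\<^sub>M i\<in>{..<N}. mu) \<Otimes>\<^sub>M (\<Pi>\<^sub>M i\<in>{..<N}. std_gaussian)))
         \<le> ennreal (1 / sqrt (real N) * (4 * T\<^sup>2 * \<epsilon> * Lt * sqrt B1))"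
proof (cases "N = 0")
  case True
  then show ?thesis by simp
next
  case False
  then have Npos: "real N > 0" by simp
  define \<gamma> where "\<gamma> = (std_gaussian :: 'a measure)"
  define I where "I = {..<N}"
  define P where "P = (\<Pi>\<^sub>M i\<in>I. mu) \<Otimes>\<^sub>M (\<Pi>\<^sub>M i\<in>I. \<gamma>)"
  define M2 where "M2 = mu \<Otimes>\<^sub>M \<gamma>"
  define \<mu>s where "\<mu>s t = nonlin_law mu qb t" for t
  define B where "B = max B1 0"
  interpret \<gamma>: prob_space \<gamma> unfolding \<gamma>_def by (rule std_gaussian_prob)
  interpret mu: prob_space mu by (rule mu_prob)
  interpret M2: pair_prob_space mu \<gamma> ..
  interpret PA: prob_space "\<Pi>\<^sub>M i\<in>I. mu" by (rule prob_space_PiM) (rule mu_prob)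
  interpret PB: prob_space "\<Pi>\<^sub>M i\<in>I. \<gamma>" by (rule prob_space_PiM) (rule \<gamma>.prob_space_axioms)
  interpret PP: pair_prob_space "\<Pi>\<^sub>M i\<in>I. mu" "\<Pi>\<^sub>M i\<in>I. \<gamma>" ..
  have \<gamma>s: "sets \<gamma> = sets borel" unfolding \<gamma>_def std_gaussian_def by simp
  have M2s: "sets M2 = sets borel"
    unfolding M2_def using sets_pair_measure_cong[OF mu_sets \<gamma>s] borel_prod by metis
  define Q where "Q t = (\<lambda>(y, w). qb t y w)" for t
  have Qm: "Q t \<in> measurable M2 borel" for t
    using qb_meas[of t] unfolding Q_def M2_def \<gamma>_def by simp
  have \<mu>s_def': "\<mu>s t = distr M2 borel (Q t)" for t
    unfolding \<mu>s_def nonlin_law_def M2_def Q_def \<gamma>_def ..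
  have \<mu>prob: "prob_space (\<mu>s t)" for t
    unfolding \<mu>s_def' M2_def by (rule M2.prob_space_distr) (use Qm[of t] in \<open>simp add: M2_def\<close>)
  have \<mu>sets: "sets (\<mu>s t) = sets borel" for t unfolding \<mu>s_def' by simp
  have B_nn: "0 \<le> B" unfolding B_def by simp
  have \<mu>mom: "integrable (\<mu>s t) (\<lambda>u. (norm u)\<^sup>2) \<and> (\<integral>u. (norm u)\<^sup>2 \<partial>\<mu>s t) \<le> B"
    if t: "t \<in> {0..T}" for t
  proof
    have nn: "(\<integral>\<^sup>+ y. ennreal ((norm y)\<^sup>2) \<partial>\<mu>s t) \<le> ennreal B"
      using B1_bound[OF t] unfolding \<mu>s_def B_def by (simp add: ennreal_max_0)
    have m: "(\<lambda>u::'a. (norm u)\<^sup>2) \<in> borel_measurable (\<mu>s t)"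
      by (subst measurable_cong_sets[OF \<mu>sets[of t] refl]) simp
    show "integrable (\<mu>s t) (\<lambda>u. (norm u)\<^sup>2)"
      by (rule integrableI_bounded[OF m]) (use nn in \<open>auto simp: top_unique intro: le_less_trans\<close>)
    have "(\<integral>u. (norm u)\<^sup>2 \<partial>\<mu>s t) = enn2real (\<integral>\<^sup>+ y. ennreal ((norm y)\<^sup>2) \<partial>\<mu>s t)"
      by (rule integral_eq_nn_integral[OF m]) simp
    also have "\<dots> \<le> B" by (rule enn2real_leI[OF B_nn nn])
    finally show "(\<integral>u. (norm u)\<^sup>2 \<partial>\<mu>s t) \<le> B" .
  qed
  have qb_cont: "continuous_on {0..T} (\<lambda>t. qb t y w)" for y w
    by (rule continuous_on_vector_derivative[OF qb_ode])
  have g_cont: "continuous_on UNIV (\<lambda>p. g1W (fst p) (snd p))"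
    by (rule lip2_cont[OF g1W_lip cst(4)])
  have gV_cont: "continuous_on UNIV gV"
  proof (rule lipschitz_on_continuous_on)
    show "L-lipschitz_on UNIV gV"
      by (rule lipschitz_onI) (use gV_lip cst(1) in \<open>auto simp: dist_norm\<close>)
  qed
  define Y where "Y i s z = qb s (fst z i) (snd z i)" for i s and z :: "(nat \<Rightarrow> 'a) \<times> (nat \<Rightarrow> 'a)"
  define D where "D i s z = norm (cmean (\<mu>s s) g1W (Y i s z) - (1 / real N) *\<^sub>R (\<Sum>j<N. g1W (Y i s z) (Y j s z)))"
    for i s z
  define E where "E s z = (\<Sum>i<N. \<epsilon> * D i s z) / real N" for s z
  have G_eq: "G y i = gV (y i) + (\<epsilon> / real N) *\<^sub>R (\<Sum>j<N. g1W (y i) (y j))" if "i < N" for y i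
    by (rule G_formula[OF gradV grad1W g1W_lip cst(4) W_sym gradU that])
  have gc: "continuous_on {0..T} (\<lambda>s. g1W (f1 s) (f2 s))"
    if "continuous_on {0..T} f1" "continuous_on {0..T} f2" for f1 f2 :: "real \<Rightarrow> 'a"
    using continuous_on_compose2[OF g_cont continuous_on_Pair[OF that]] by simp
  have mcut: "\<And>t. t \<in> {0..T} \<Longrightarrow> integrable (\<mu>s t) (\<lambda>u. (norm u)\<^sup>2)"
    and mcut2: "\<And>t. t \<in> {0..T} \<Longrightarrow> (\<integral>u. (norm u)\<^sup>2 \<partial>\<mu>s t) \<le> B"
    using \<mu>mom by auto
  have e_int: "(\<lambda>s. \<epsilon> * D i s z) integrable_on {0..T}" if i: "i < N" for i z
  proof -
    define x where "x = fst z"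
    define v where "v = snd z"
    have Yxv: "Y i s z = qb s (x i) (v i)" for i s unfolding Y_def x_def v_def ..
    have Ycont: "continuous_on {0..T} (\<lambda>s. Y i s z)" for i unfolding Yxv by (rule qb_cont)
    define c where "c s = cmean (\<mu>s s) g1W (Y i s z)" for s
    define Sa where "Sa s = (\<Sum>j<N. g1W (Y i s z) (Y j s z))" for s
    define u where "u s = \<epsilon> *\<^sub>R c s - (\<epsilon> / real N) *\<^sub>R Sa s" for s
    have eu: "\<epsilon> * D i s z = norm (u s)" for s
    proof -
      have "u s = \<epsilon> *\<^sub>R (c s - (1 / real N) *\<^sub>R Sa s)" unfolding u_def by (simp add: scaleR_diff_right)
      then show ?thesis unfolding D_def c_def Sa_def using eps_nn by simp
    qed
    define Fa where "Fa s = - gV (qb s (x i) (v i)) - \<epsilon> *\<^sub>R c s" for s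
    have Fa_int: "Fa integrable_on {0..T}"
    proof -
      have "(Fa has_integral (pb T (x i) (v i) - pb 0 (x i) (v i))) {0..T}"
      proof (rule fundamental_theorem_of_calculus)
        show "0 \<le> T" using T_pos by simp
        fix t assume t: "t \<in> {0..T}"
        show "((\<lambda>s. pb s (x i) (v i)) has_vector_derivative Fa t) (at t within {0..T})"
          using pb_ode[OF t] unfolding Fa_def c_def cmean_def \<mu>s_def Yxv .
      qed
      then show ?thesis by blast
    qed
    have gVc: "continuous_on {0..T} (\<lambda>s. gV (qb s (x i) (v i)))"
      using continuous_on_compose2[OF gV_cont qb_cont] by simp
    have Sac: "continuous_on {0..T} Sa"
      unfolding Sa_def by (intro continuous_on_sum gc Ycont)
    have u_eq: "u s = - Fa s - gV (qb s (x i) (v i)) - (\<epsilon> / real N) *\<^sub>R Sa s" for s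
      unfolding u_def Fa_def by simp
    have u_int: "u integrable_on {0..T}"
      unfolding u_eq[abs_def]
      by (intro integrable_diff integrable_neg Fa_int integrable_continuous_interval gVc continuous_intros Sac)
    define h where "h s = \<epsilon> * Lt * (sqrt B + (\<Sum>j<N. norm (Y j s z)) / real N)" for s
    have h_int: "h integrable_on {0..T}"
      unfolding h_def using Npos by (intro integrable_continuous_interval continuous_intros Ycont) auto
    have ub: "norm (u s) \<le> h s" if s: "s \<in> {0..T}" for s
    proof -
      note cb = cmean_bound[OF \<mu>prob \<mu>sets g1W_lip cst(4) mcut[OF s] mcut2[OF s]]
      note msq = m1_sq[OF \<mu>prob \<mu>sets g1W_lip cst(4) mcut[OF s] mcut2[OF s]]
      have m1b: "(\<integral>u. norm u \<partial>\<mu>s s) \<le> sqrt B" using msq by (rule real_le_rsqrt)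
      have "c s - (1 / real N) *\<^sub>R Sa s = (1 / real N) *\<^sub>R (\<Sum>j<N. c s - g1W (Y i s z) (Y j s z))"
        unfolding Sa_def using Npos by (simp add: sum_subtractf scaleR_diff_right sum_constant_scaleR)
      then have "norm (c s - (1 / real N) *\<^sub>R Sa s) = (1 / real N) * norm (\<Sum>j<N. c s - g1W (Y i s z) (Y j s z))"
        using Npos by simp
      also have "\<dots> \<le> (1 / real N) * (\<Sum>j<N. Lt * (sqrt B + norm (Y j s z)))"
      proof (intro mult_left_mono order_trans[OF norm_sum] sum_mono)
        fix j
        have "norm (c s - g1W (Y i s z) (Y j s z)) \<le> Lt * ((\<integral>u. norm u \<partial>\<mu>s s) + norm (Y j s z))"
          unfolding c_def by (rule cb)
        also have "\<dots> \<le> Lt * (sqrt B + norm (Y j s z))" using m1b cst(4) by (intro mult_left_mono) auto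
        finally show "norm (c s - g1W (Y i s z) (Y j s z)) \<le> Lt * (sqrt B + norm (Y j s z))" .
      qed simp
      also have "\<dots> = Lt * (sqrt B + (\<Sum>j<N. norm (Y j s z)) / real N)"
        using Npos by (simp add: sum.distrib sum_distrib_left[symmetric] field_simps)
      finally have "norm (c s - (1 / real N) *\<^sub>R Sa s) \<le> Lt * (sqrt B + (\<Sum>j<N. norm (Y j s z)) / real N)" .
      then have "\<epsilon> * norm (c s - (1 / real N) *\<^sub>R Sa s) \<le> h s"
        unfolding h_def using eps_nn by (simp add: mult.assoc mult_left_mono)
      moreover have "norm (u s) = \<epsilon> * norm (c s - (1 / real N) *\<^sub>R Sa s)"
        using eu[of s] unfolding D_def c_def Sa_def by simp
      ultimately show ?thesis by simp
    qed
    have "u absolutely_integrable_on {0..T}"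
      by (rule absolutely_integrable_integrable_bound[OF ub u_int h_int])
    then have "(\<lambda>s. norm (u s)) integrable_on {0..T}"
      by (simp add: absolutely_integrable_on_def)
    then show ?thesis unfolding eu .
  qed
  have path: "(1 / real N) * (\<Sum>i<N. norm (qb T (fst z i) (snd z i) - q T (fst z) (snd z) i))
      \<le> 2 * T * integral {0..T} (\<lambda>s. E s z)" for z
  proof -
    define x where "x = fst z"
    define v where "v = snd z"
    have Yxv: "Y i s z = qb s (x i) (v i)" for i s unfolding Y_def x_def v_def ..
    have Ycont: "continuous_on {0..T} (\<lambda>s. Y i s z)" for i unfolding Yxv by (rule qb_cont)
    have "(\<Sum>i<N. norm (qb T (x i) (v i) - q T x v i)) / real N
        \<le> 2 * T * integral {0..T} (\<lambda>s. (\<Sum>i<N. \<epsilon> * D i s z) / real N)"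
    proof (rule pathwise_bound[where \<alpha> = "L + \<epsilon> * Lt" and \<beta> = "\<epsilon> * Lt"
          and P = "\<lambda>i s. pb s (x i) (v i) - p s x v i"
          and F = "\<lambda>i s. (- gV (qb s (x i) (v i)) - \<epsilon> *\<^sub>R cmean (\<mu>s s) g1W (qb s (x i) (v i))) - (- G (q s x v) i)"])
      show "0 < T" by (rule T_pos)
      show "0 \<le> L + \<epsilon> * Lt" using cst eps_nn by simp
      show "0 \<le> \<epsilon> * Lt" using cst eps_nn by simp
      show "(L + \<epsilon> * Lt + \<epsilon> * Lt) * T\<^sup>2 \<le> 1" using step by (simp add: algebra_simps)
    next
      fix i assume i: "i < N"
      show "qb 0 (x i) (v i) - q 0 x v i = 0" using qb_init q_init i by simp
      show "pb 0 (x i) (v i) - p 0 x v i = 0" using qb_init q_init i by simp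
    next
      fix i s assume i: "i < N" and s: "s \<in> {0..T}"
      show "((\<lambda>s. qb s (x i) (v i) - q s x v i) has_vector_derivative pb s (x i) (v i) - p s x v i) (at s within {0..T})"
        by (rule has_vector_derivative_diff[OF qb_ode[OF s] q_ode[OF i s]])
      show "((\<lambda>s. pb s (x i) (v i) - p s x v i) has_vector_derivative
          (- gV (qb s (x i) (v i)) - \<epsilon> *\<^sub>R cmean (\<mu>s s) g1W (qb s (x i) (v i))) - (- G (q s x v) i)) (at s within {0..T})"
        using has_vector_derivative_diff[OF pb_ode[OF s] p_ode[OF i s]] unfolding cmean_def \<mu>s_def .
    next
      fix i s assume i: "i < N" and s: "s \<in> {0..T}"
      show "norm ((- gV (qb s (x i) (v i)) - \<epsilon> *\<^sub>R cmean (\<mu>s s) g1W (qb s (x i) (v i))) - (- G (q s x v) i))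
         \<le> (L + \<epsilon> * Lt) * norm (qb s (x i) (v i) - q s x v i) +
            \<epsilon> * Lt * ((\<Sum>j<N. norm (qb s (x j) (v j) - q s x v j)) / real N) + \<epsilon> * D i s z"
      proof -
        define a where "a j = qb s (x j) (v j)" for j
        define b where "b j = q s x v j" for j
        define c where "c = cmean (\<mu>s s) g1W (a i)"
        define Sa where "Sa = (\<Sum>j<N. g1W (a i) (a j))"
        define Sb where "Sb = (\<Sum>j<N. g1W (b i) (b j))"
        have Dz: "D i s z = norm (c - (1 / real N) *\<^sub>R Sa)"
          unfolding D_def c_def Sa_def a_def Yxv ..
        have Gq: "G (q s x v) i = gV (b i) + (\<epsilon> / real N) *\<^sub>R Sb"
          unfolding b_def Sb_def using G_eq[OF i] .
        have Feq: "(- gV (a i) - \<epsilon> *\<^sub>R c) - (- G (q s x v) i) =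
            - (gV (a i) - gV (b i)) - \<epsilon> *\<^sub>R (c - (1 / real N) *\<^sub>R Sa) - (\<epsilon> / real N) *\<^sub>R (Sa - Sb)"
          unfolding Gq by (simp add: scaleR_diff_right algebra_simps)
        have n1: "norm (gV (a i) - gV (b i)) \<le> L * norm (a i - b i)" by (rule gV_lip)
        have n2: "norm (\<epsilon> *\<^sub>R (c - (1 / real N) *\<^sub>R Sa)) = \<epsilon> * D i s z"
          unfolding Dz using eps_nn by simp
        have "norm (Sa - Sb) \<le> (\<Sum>j<N. Lt * (norm (a i - b i) + norm (a j - b j)))"
        proof -
          have "norm (Sa - Sb) = norm (\<Sum>j<N. g1W (a i) (a j) - g1W (b i) (b j))"
            unfolding Sa_def Sb_def by (simp add: sum_subtractf)
          also have "\<dots> \<le> (\<Sum>j<N. norm (g1W (a i) (a j) - g1W (b i) (b j)))" by (rule norm_sum)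
          also have "\<dots> \<le> (\<Sum>j<N. Lt * (norm (a i - b i) + norm (a j - b j)))"
            by (intro sum_mono g1W_lip)
          finally show ?thesis .
        qed
        also have "\<dots> = real N * Lt * norm (a i - b i) + Lt * (\<Sum>j<N. norm (a j - b j))"
          by (simp add: sum.distrib sum_distrib_left algebra_simps)
        finally have n3': "norm (Sa - Sb) \<le> real N * Lt * norm (a i - b i) + Lt * (\<Sum>j<N. norm (a j - b j))" .
        have n3: "norm ((\<epsilon> / real N) *\<^sub>R (Sa - Sb)) \<le> \<epsilon> * Lt * norm (a i - b i) + \<epsilon> * Lt * ((\<Sum>j<N. norm (a j - b j)) / real N)"
        proof -
          have "norm ((\<epsilon> / real N) *\<^sub>R (Sa - Sb)) = (\<epsilon> / real N) * norm (Sa - Sb)"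
            using eps_nn by simp
          also have "\<dots> \<le> (\<epsilon> / real N) * (real N * Lt * norm (a i - b i) + Lt * (\<Sum>j<N. norm (a j - b j)))"
            using n3' eps_nn by (intro mult_left_mono) auto
          also have "\<dots> = \<epsilon> * Lt * norm (a i - b i) + \<epsilon> * Lt * ((\<Sum>j<N. norm (a j - b j)) / real N)"
            using Npos by (simp add: field_simps)
          finally show ?thesis .
        qed
        have "norm ((- gV (a i) - \<epsilon> *\<^sub>R c) - (- G (q s x v) i))
            \<le> norm (gV (a i) - gV (b i)) + norm (\<epsilon> *\<^sub>R (c - (1 / real N) *\<^sub>R Sa)) + norm ((\<epsilon> / real N) *\<^sub>R (Sa - Sb))"
          unfolding Feq by (rule norm3)
        also have "\<dots> \<le> L * norm (a i - b i) + \<epsilon> * D i s z +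
            (\<epsilon> * Lt * norm (a i - b i) + \<epsilon> * Lt * ((\<Sum>j<N. norm (a j - b j)) / real N))"
          using n1 n2 n3 by linarith
        finally show ?thesis unfolding a_def b_def c_def by (simp add: algebra_simps)
      qed
    next
      fix i assume i: "i < N"
      show "(\<lambda>s. \<epsilon> * D i s z) integrable_on {0..T}" by (rule e_int[OF i])
    next
      fix i s assume "i < N" "s \<in> {0..T}"
      show "0 \<le> \<epsilon> * D i s z" unfolding D_def using eps_nn by simp
    qed
    then show ?thesis unfolding E_def x_def v_def by (simp add: divide_inverse mult.commute)
  qed
  have Pprob: "prob_space P" unfolding P_def by (rule PP.P.prob_space_axioms)
  interpret Pp: prob_space P by (rule Pprob)
  interpret LP: pair_sigma_finite "lborel :: real measure" P
    by (intro pair_sigma_finite.intro lborel.sigma_finite_measure_axioms prob_space_imp_sigma_finite Pprob)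
  have E_nn: "0 \<le> E s z" for s z
    unfolding E_def D_def using eps_nn Npos by (auto intro!: divide_nonneg_nonneg sum_nonneg)
  have E_int: "(\<lambda>s. E s z) integrable_on {0..T}" for z
    unfolding E_def using e_int by (intro integrable_on_divide integrable_sum) auto
  have E_nn_int: "(\<integral>\<^sup>+s. ennreal (indicator {0..T} s * E s z) \<partial>lborel) = ennreal (integral {0..T} (\<lambda>s. E s z))" for z
    by (rule nn_integral_has_integral_lebesgue) (use E_nn integrable_integral[OF E_int] in auto)
  define f where "f s z = ennreal (indicator {0..T} s * E s z)" for s z
  have fmeas: "case_prod f \<in> borel_measurable (lborel \<Otimes>\<^sub>M P)"
  proof -
    define cl where "cl s = max 0 (min T s)" for s :: real
    have M2prob: "prob_space M2" unfolding M2_def by (rule M2.P.prob_space_axioms)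
    have sfM2: "sigma_finite_measure M2" by (rule prob_space_imp_sigma_finite[OF M2prob])
    have qbc: "(\<lambda>p::real \<times> ('a \<times> 'a). qb (cl (fst p)) (fst (snd p)) (snd (snd p))) \<in> borel_measurable (lborel \<Otimes>\<^sub>M M2)"
      unfolding cl_def
    proof (rule carath[where f = "\<lambda>t \<omega>. qb t (fst \<omega>) (snd \<omega>)"])
      fix t show "(\<lambda>\<omega>. qb t (fst \<omega>) (snd \<omega>)) \<in> borel_measurable M2"
        using Qm[of t] unfolding Q_def by (simp add: case_prod_beta')
    next
      fix \<omega> :: "'a \<times> 'a" show "continuous_on {0..T} (\<lambda>t. qb t (fst \<omega>) (snd \<omega>))" by (rule qb_cont)
    qed (use T_pos in simp)
    have Yc: "(\<lambda>p::real \<times> ((nat \<Rightarrow> 'a) \<times> (nat \<Rightarrow> 'a)). qb (cl (fst p)) (fst (snd p) i) (snd (snd p) i)) \<in> borel_measurable (lborel \<Otimes>\<^sub>M P)"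
      if i: "i < N" for i
    proof -
      have iI: "i \<in> I" using i unfolding I_def by simp
      have "(\<lambda>p::real \<times> ((nat \<Rightarrow> 'a) \<times> (nat \<Rightarrow> 'a)). (fst p, (fst (snd p) i, snd (snd p) i))) \<in> measurable (lborel \<Otimes>\<^sub>M P) (lborel \<Otimes>\<^sub>M M2)"
        unfolding P_def M2_def using iI by measurable
      from measurable_compose[OF this qbc] show ?thesis by simp
    qed
    have Kc: "(\<lambda>q::real \<times> 'a. cmean (\<mu>s (cl (fst q))) g1W (snd q)) \<in> borel_measurable (lborel \<Otimes>\<^sub>M borel)"
    proof -
      have eq: "cmean (\<mu>s t) g1W a = (\<integral>\<omega>. g1W a (qb t (fst \<omega>) (snd \<omega>)) \<partial>M2)" for t a
      proof -
        have gm: "g1W a \<in> borel_measurable borel"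
          using borel_measurable_continuous_Pair[OF measurable_const[of a] measurable_ident_sets[OF refl] g_cont] by simp
        show ?thesis unfolding cmean_def \<mu>s_def' using integral_distr[OF Qm gm] unfolding Q_def
          by (simp add: case_prod_beta')
      qed
      have "(\<lambda>(q::real \<times> 'a, \<omega>::'a \<times> 'a). g1W (snd q) (qb (cl (fst q)) (fst \<omega>) (snd \<omega>))) \<in> borel_measurable ((lborel \<Otimes>\<^sub>M borel) \<Otimes>\<^sub>M M2)"
      proof -
        have m1: "(\<lambda>p::(real \<times> 'a) \<times> ('a \<times> 'a). snd (fst p)) \<in> borel_measurable ((lborel \<Otimes>\<^sub>M borel) \<Otimes>\<^sub>M M2)"
          by measurable
        have "(\<lambda>p::(real \<times> 'a) \<times> ('a \<times> 'a). (fst (fst p), snd p)) \<in> measurable ((lborel \<Otimes>\<^sub>M borel) \<Otimes>\<^sub>M M2) (lborel \<Otimes>\<^sub>M M2)"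
          by measurable
        from measurable_compose[OF this qbc]
        have m2: "(\<lambda>p::(real \<times> 'a) \<times> ('a \<times> 'a). qb (cl (fst (fst p))) (fst (snd p)) (snd (snd p))) \<in> borel_measurable ((lborel \<Otimes>\<^sub>M borel) \<Otimes>\<^sub>M M2)"
          by simp
        show ?thesis using borel_measurable_continuous_Pair[OF m1 m2 g_cont] by (simp add: case_prod_beta')
      qed
      from sigma_finite_measure.borel_measurable_lebesgue_integral[OF sfM2 this]
      show ?thesis unfolding eq by simp
    qed
    have Dc: "(\<lambda>p::real \<times> ((nat \<Rightarrow> 'a) \<times> (nat \<Rightarrow> 'a)). D i (cl (fst p)) (snd p)) \<in> borel_measurable (lborel \<Otimes>\<^sub>M P)"
      if i: "i < N" for i
    proof -
      have "(\<lambda>p::real \<times> ((nat \<Rightarrow> 'a) \<times> (nat \<Rightarrow> 'a)). (fst p, qb (cl (fst p)) (fst (snd p) i) (snd (snd p) i))) \<in> measurable (lborel \<Otimes>\<^sub>M P) (lborel \<Otimes>\<^sub>M borel)"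
        using Yc[OF i] by (intro measurable_Pair) auto
      from measurable_compose[OF this Kc]
      have k: "(\<lambda>p::real \<times> ((nat \<Rightarrow> 'a) \<times> (nat \<Rightarrow> 'a)). cmean (\<mu>s (cl (fst p))) g1W (qb (cl (fst p)) (fst (snd p) i) (snd (snd p) i))) \<in> borel_measurable (lborel \<Otimes>\<^sub>M P)"
        by simp
      have gg: "(\<lambda>p::real \<times> ((nat \<Rightarrow> 'a) \<times> (nat \<Rightarrow> 'a)). g1W (qb (cl (fst p)) (fst (snd p) i) (snd (snd p) i)) (qb (cl (fst p)) (fst (snd p) j) (snd (snd p) j))) \<in> borel_measurable (lborel \<Otimes>\<^sub>M P)"
        if j: "j < N" for j
        by (rule borel_measurable_continuous_Pair[OF Yc[OF i] Yc[OF j] g_cont])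
      have sm: "(\<lambda>p::real \<times> ((nat \<Rightarrow> 'a) \<times> (nat \<Rightarrow> 'a)). \<Sum>j<N. g1W (qb (cl (fst p)) (fst (snd p) i) (snd (snd p) i)) (qb (cl (fst p)) (fst (snd p) j) (snd (snd p) j))) \<in> borel_measurable (lborel \<Otimes>\<^sub>M P)"
        by (rule borel_measurable_sum) (rule gg, simp)
      have dm: "(\<lambda>p::real \<times> ((nat \<Rightarrow> 'a) \<times> (nat \<Rightarrow> 'a)). cmean (\<mu>s (cl (fst p))) g1W (qb (cl (fst p)) (fst (snd p) i) (snd (snd p) i))
          - (1 / real N) *\<^sub>R (\<Sum>j<N. g1W (qb (cl (fst p)) (fst (snd p) i) (snd (snd p) i)) (qb (cl (fst p)) (fst (snd p) j) (snd (snd p) j)))) \<in> borel_measurable (lborel \<Otimes>\<^sub>M P)"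
        by (intro borel_measurable_diff k borel_measurable_scaleR borel_measurable_const sm)
      show ?thesis unfolding D_def Y_def using measurable_compose[OF dm borel_measurable_norm] by (simp add: comp_def)
    qed
    have fm: "(\<lambda>p::real \<times> ((nat \<Rightarrow> 'a) \<times> (nat \<Rightarrow> 'a)). ennreal (indicator {0..T} (fst p) * ((\<Sum>i<N. \<epsilon> * D i (cl (fst p)) (snd p)) / real N))) \<in> borel_measurable (lborel \<Otimes>\<^sub>M P)"
    proof -
      have "(\<lambda>p::real \<times> ((nat \<Rightarrow> 'a) \<times> (nat \<Rightarrow> 'a)). indicator {0..T} (fst p) * ((\<Sum>i<N. \<epsilon> * D i (cl (fst p)) (snd p)) / real N)) \<in> borel_measurable (lborel \<Otimes>\<^sub>M P)"
      proof (rule borel_measurable_times)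
        show "(\<lambda>p::real \<times> ((nat \<Rightarrow> 'a) \<times> (nat \<Rightarrow> 'a)). indicator {0..T} (fst p) :: real) \<in> borel_measurable (lborel \<Otimes>\<^sub>M P)"
          using measurable_compose[OF measurable_fst borel_measurable_indicator[of "{0..T}" "lborel::real measure"]]
          by (simp add: comp_def)
        have "(\<lambda>p::real \<times> ((nat \<Rightarrow> 'a) \<times> (nat \<Rightarrow> 'a)). \<Sum>i<N. \<epsilon> * D i (cl (fst p)) (snd p)) \<in> borel_measurable (lborel \<Otimes>\<^sub>M P)"
          by (rule borel_measurable_sum) (rule borel_measurable_times[OF borel_measurable_const Dc], simp)
        then show "(\<lambda>p::real \<times> ((nat \<Rightarrow> 'a) \<times> (nat \<Rightarrow> 'a)). (\<Sum>i<N. \<epsilon> * D i (cl (fst p)) (snd p)) / real N) \<in> borel_measurable (lborel \<Otimes>\<^sub>M P)"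
          by (rule borel_measurable_divide[OF _ borel_measurable_const])
      qed
      then show ?thesis by (rule measurable_compose[OF _ measurable_ennreal])
    qed
    have feq: "case_prod f = (\<lambda>p. ennreal (indicator {0..T} (fst p) * ((\<Sum>i<N. \<epsilon> * D i (cl (fst p)) (snd p)) / real N)))"
    proof
      fix p :: "real \<times> ((nat \<Rightarrow> 'a) \<times> (nat \<Rightarrow> 'a))"
      show "case_prod f p = ennreal (indicator {0..T} (fst p) * ((\<Sum>i<N. \<epsilon> * D i (cl (fst p)) (snd p)) / real N))"
      proof (cases "fst p \<in> {0..T}")
        case True
        then have "cl (fst p) = fst p" unfolding cl_def by auto
        then show ?thesis unfolding f_def E_def by (simp add: case_prod_beta')
      next
        case False
        then show ?thesis unfolding f_def by (simp add: case_prod_beta')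
      qed
    qed
    show ?thesis unfolding feq by (rule fm)
  qed
  define cB where "cB = \<epsilon> * (2 * Lt * sqrt B / sqrt N)"
  have Dbound: "(\<integral>\<^sup>+z. ennreal (D i s z) \<partial>P) \<le> ennreal (2 * Lt * sqrt B / sqrt N)"
    and Dmeas: "(\<lambda>z. ennreal (D i s z)) \<in> borel_measurable P"
    if s: "s \<in> {0..T}" and i: "i < N" for s i
  proof -
    have iI: "i \<in> I" using i unfolding I_def by simp
    have finI: "finite I" unfolding I_def by simp
    define \<Phi> where "\<Phi> z = (\<lambda>j\<in>I. Q s (fst z j, snd z j))" for z :: "(nat \<Rightarrow> 'a) \<times> (nat \<Rightarrow> 'a)"
    define Fi where "Fi y = ennreal (norm (cmean (\<mu>s s) g1W (y i) - (1 / real N) *\<^sub>R (\<Sum>j<N. g1W (y i) (y j))))"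
      for y :: "nat \<Rightarrow> 'a"
    have QmM: "Q s \<in> measurable (mu \<Otimes>\<^sub>M \<gamma>) borel" using Qm[of s] unfolding M2_def .
    have comp: "(\<lambda>z. (fst z j, snd z j)) \<in> measurable P (mu \<Otimes>\<^sub>M \<gamma>)" if "j \<in> I" for j
      unfolding P_def using that by measurable
    have \<Phi>m: "\<Phi> \<in> measurable P (PiM I (\<lambda>_. \<mu>s s))"
      unfolding \<Phi>_def
    proof (rule measurable_restrict)
      fix j assume j: "j \<in> I"
      have "(\<lambda>z. Q s (fst z j, snd z j)) \<in> measurable P borel"
        using measurable_compose[OF comp[OF j] QmM] .
      then show "(\<lambda>z. Q s (fst z j, snd z j)) \<in> measurable P (\<mu>s s)"
        by (subst measurable_cong_sets[OF refl \<mu>sets]) simp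
    qed
    have dist: "distr P (PiM I (\<lambda>_. \<mu>s s)) \<Phi> = PiM I (\<lambda>_. \<mu>s s)"
      using distr_pairs[OF mu_prob \<gamma>.prob_space_axioms QmM finI]
      unfolding P_def \<Phi>_def[abs_def] \<mu>s_def' M2_def .
    note ctx = \<mu>prob[of s] \<mu>sets[of s] g1W_lip cst(4) mcut[OF s] mcut2[OF s]
    have Fm0: "(\<lambda>y. cmean (\<mu>s s) g1W (y i) - (1 / real N) *\<^sub>R (\<Sum>j<N. g1W (y i) (y j))) \<in> borel_measurable (PiM I (\<lambda>_. \<mu>s s))"
    proof (intro borel_measurable_diff borel_measurable_scaleR borel_measurable_const borel_measurable_sum)
      show "(\<lambda>y. cmean (\<mu>s s) g1W (y i)) \<in> borel_measurable (PiM I (\<lambda>_. \<mu>s s))"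
        by (rule cmean_meas'[OF ctx comp_meas[OF ctx iI]])
      fix j assume "j \<in> {..<N}"
      then have jI: "j \<in> I" unfolding I_def .
      show "(\<lambda>y. g1W (y i) (y j)) \<in> borel_measurable (PiM I (\<lambda>_. \<mu>s s))"
        by (rule g_meas[OF ctx comp_meas[OF ctx iI] comp_meas[OF ctx jI]])
    qed
    have Fm: "Fi \<in> borel_measurable (PiM I (\<lambda>_. \<mu>s s))"
      unfolding Fi_def[abs_def] using Fm0 by measurable
    have FiPhi: "Fi (\<Phi> z) = ennreal (D i s z)" for z
    proof -
      have "\<Phi> z j = Y j s z" if "j < N" for j
        using that unfolding \<Phi>_def Y_def Q_def I_def by simp
      then show ?thesis unfolding Fi_def D_def using i by simp
    qed
    show "(\<lambda>z. ennreal (D i s z)) \<in> borel_measurable P"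
      using measurable_compose[OF \<Phi>m Fm] unfolding FiPhi[symmetric] comp_def by simp
    have "(\<integral>\<^sup>+z. ennreal (D i s z) \<partial>P) = (\<integral>\<^sup>+z. Fi (\<Phi> z) \<partial>P)" unfolding FiPhi ..
    also have "\<dots> = (\<integral>\<^sup>+y. Fi y \<partial>distr P (PiM I (\<lambda>_. \<mu>s s)) \<Phi>)"
      by (rule nn_integral_distr[symmetric, OF \<Phi>m]) (use Fm in simp)
    also have "\<dots> = (\<integral>\<^sup>+y. Fi y \<partial>PiM I (\<lambda>_. \<mu>s s))" unfolding dist ..
    also have "\<dots> \<le> ennreal (2 * Lt * sqrt B / sqrt N)"
      unfolding Fi_def by (rule core[OF ctx I_def i])
    finally show "(\<integral>\<^sup>+z. ennreal (D i s z) \<partial>P) \<le> ennreal (2 * Lt * sqrt B / sqrt N)" .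
  qed
  have inner: "(\<integral>\<^sup>+z. f s z \<partial>P) \<le> ennreal cB * indicator {0..T} s" for s
  proof (cases "s \<in> {0..T}")
    case False
    then show ?thesis unfolding f_def by simp
  next
    case True
    have fe: "f s z = ennreal (\<epsilon> / real N) * (\<Sum>i<N. ennreal (D i s z))" for z
    proof -
      have "f s z = ennreal ((\<epsilon> / real N) * (\<Sum>i<N. D i s z))"
        unfolding f_def E_def using True by (simp add: sum_distrib_left sum_divide_distrib)
      also have "\<dots> = ennreal (\<epsilon> / real N) * ennreal (\<Sum>i<N. D i s z)"
        by (rule ennreal_mult) (use eps_nn Npos in \<open>auto simp: D_def intro: sum_nonneg\<close>)
      also have "ennreal (\<Sum>i<N. D i s z) = (\<Sum>i<N. ennreal (D i s z))"
        by (rule sum_ennreal[symmetric]) (simp add: D_def)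
      finally show ?thesis .
    qed
    have "(\<integral>\<^sup>+z. f s z \<partial>P) = ennreal (\<epsilon> / real N) * (\<Sum>i<N. (\<integral>\<^sup>+z. ennreal (D i s z) \<partial>P))"
    proof -
      have sm: "(\<lambda>z. \<Sum>i<N. ennreal (D i s z)) \<in> borel_measurable P"
        by (rule borel_measurable_sum) (rule Dmeas[OF True], simp)
      have "(\<integral>\<^sup>+z. ennreal (\<epsilon> / real N) * (\<Sum>i<N. ennreal (D i s z)) \<partial>P)
          = ennreal (\<epsilon> / real N) * (\<integral>\<^sup>+z. (\<Sum>i<N. ennreal (D i s z)) \<partial>P)"
        by (rule nn_integral_cmult[OF sm])
      also have "(\<integral>\<^sup>+z. (\<Sum>i<N. ennreal (D i s z)) \<partial>P) = (\<Sum>i<N. (\<integral>\<^sup>+z. ennreal (D i s z) \<partial>P))"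
        by (rule nn_integral_sum) (rule Dmeas[OF True], simp)
      finally show ?thesis unfolding fe .
    qed
    also have "\<dots> \<le> ennreal (\<epsilon> / real N) * (\<Sum>i<N. ennreal (2 * Lt * sqrt B / sqrt N))"
      by (intro mult_left_mono sum_mono Dbound[OF True]) auto
    also have "\<dots> = ennreal cB"
    proof -
      define c where "c = 2 * Lt * sqrt B / sqrt N"
      have c_nn: "0 \<le> c" unfolding c_def using cst B_nn by simp
      have "(\<Sum>i<N. ennreal c) = of_nat N * ennreal c" by simp
      also have "\<dots> = ennreal (real N) * ennreal c" by (simp add: ennreal_of_nat_eq_real_of_nat)
      also have "\<dots> = ennreal (real N * c)" by (rule ennreal_mult[symmetric]) (use c_nn in auto)
      finally have sc: "(\<Sum>i<N. ennreal c) = ennreal (real N * c)" .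
      have "ennreal (\<epsilon> / real N) * (\<Sum>i<N. ennreal (2 * Lt * sqrt B / sqrt N)) =
          ennreal (\<epsilon> / real N * (real N * (2 * Lt * sqrt B / sqrt N)))"
        unfolding c_def[symmetric] sc by (rule ennreal_mult[symmetric]) (use c_nn eps_nn in auto)
      also have "\<epsilon> / real N * (real N * (2 * Lt * sqrt B / sqrt N)) = cB"
        unfolding cB_def using Npos by simp
      finally show ?thesis .
    qed
    finally show ?thesis using True by simp
  qed
  have fmeas': "(\<lambda>z. \<integral>\<^sup>+s. f s z \<partial>lborel) \<in> borel_measurable P"
  proof -
    have "(\<lambda>(z, s). f s z) \<in> borel_measurable (P \<Otimes>\<^sub>M lborel)"
      using measurable_pair_swap[OF fmeas] by simp
    then show ?thesis by (rule lborel.borel_measurable_nn_integral)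
  qed
  have "(\<integral>\<^sup>+ z. ennreal ((1 / real N) * (\<Sum>i<N. norm (qb T (fst z i) (snd z i) - q T (fst z) (snd z) i))) \<partial>P)
      \<le> (\<integral>\<^sup>+ z. ennreal (2 * T) * (\<integral>\<^sup>+s. f s z \<partial>lborel) \<partial>P)"
  proof (rule nn_integral_mono)
    fix z
    have "ennreal ((1 / real N) * (\<Sum>i<N. norm (qb T (fst z i) (snd z i) - q T (fst z) (snd z) i)))
        \<le> ennreal (2 * T * integral {0..T} (\<lambda>s. E s z))" by (rule ennreal_leI[OF path])
    also have "\<dots> = ennreal (2 * T) * (\<integral>\<^sup>+s. f s z \<partial>lborel)"
    proof -
      have Inn: "0 \<le> integral {0..T} (\<lambda>s. E s z)" by (rule integral_nonneg[OF E_int]) (simp add: E_nn)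
      have "ennreal (2 * T * integral {0..T} (\<lambda>s. E s z)) = ennreal (2 * T) * ennreal (integral {0..T} (\<lambda>s. E s z))"
        using T_pos Inn by (intro ennreal_mult) auto
      then show ?thesis unfolding f_def E_nn_int .
    qed
    finally show "ennreal ((1 / real N) * (\<Sum>i<N. norm (qb T (fst z i) (snd z i) - q T (fst z) (snd z) i)))
        \<le> ennreal (2 * T) * (\<integral>\<^sup>+s. f s z \<partial>lborel)" .
  qed
  also have "\<dots> = ennreal (2 * T) * (\<integral>\<^sup>+ z. (\<integral>\<^sup>+s. f s z \<partial>lborel) \<partial>P)"
    by (rule nn_integral_cmult[OF fmeas'])
  also have "(\<integral>\<^sup>+ z. (\<integral>\<^sup>+s. f s z \<partial>lborel) \<partial>P) \<le> ennreal cB * ennreal T"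
  proof -
    have "(\<integral>\<^sup>+ z. (\<integral>\<^sup>+s. f s z \<partial>lborel) \<partial>P) = (\<integral>\<^sup>+ s. (\<integral>\<^sup>+z. f s z \<partial>P) \<partial>lborel)"
      by (rule LP.Fubini'[OF fmeas])
    also have "\<dots> \<le> (\<integral>\<^sup>+ s. ennreal cB * indicator {0..T} s \<partial>lborel)"
      by (rule nn_integral_mono) (rule inner)
    also have "\<dots> = ennreal cB * ennreal T"
      using T_pos by (simp add: nn_integral_cmult_indicator)
    finally show ?thesis .
  qed
  finally have main: "(\<integral>\<^sup>+ z. ennreal ((1 / real N) * (\<Sum>i<N. norm (qb T (fst z i) (snd z i) - q T (fst z) (snd z) i))) \<partial>P)
      \<le> ennreal (2 * T) * (ennreal cB * ennreal T)" by (simp add: mult_left_mono)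
  have cB_nn: "0 \<le> cB" unfolding cB_def using eps_nn cst B_nn by (intro mult_nonneg_nonneg divide_nonneg_nonneg) auto
  have "ennreal (2 * T) * (ennreal cB * ennreal T) = ennreal (1 / sqrt (real N) * (4 * T\<^sup>2 * \<epsilon> * Lt * sqrt B))"
  proof -
    have e1: "ennreal cB * ennreal T = ennreal (cB * T)" by (rule ennreal_mult[symmetric]) (use cB_nn T_pos in auto)
    have e2: "ennreal (2 * T) * ennreal (cB * T) = ennreal (2 * T * (cB * T))"
      by (rule ennreal_mult[symmetric]) (use cB_nn T_pos in auto)
    have e3: "2 * T * (cB * T) = 1 / sqrt (real N) * (4 * T\<^sup>2 * \<epsilon> * Lt * sqrt B)"
      unfolding cB_def by (simp add: power2_eq_square field_simps)
    show ?thesis unfolding e1 e2 e3 ..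
  qed
  also have "\<dots> \<le> ennreal (1 / sqrt (real N) * (4 * T\<^sup>2 * \<epsilon> * Lt * sqrt B1))"
  proof (cases "B1 \<ge> 0")
    case True then show ?thesis unfolding B_def by simp
  next
    case False then show ?thesis unfolding B_def by simp
  qed
  finally show ?thesis using main unfolding P_def I_def \<gamma>_def by simp
qed

end
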